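(* Let $N$ be a nonnegative integer and let $f,a_1,d_1,d_2\in\mathbb{C}$ be such that every hypergeometric series below is well defined (no lower parameter is a nonpositive integer) and all denominators in the definitions of $h$ and $k$ below are nonzero. Put $$h=\frac{(\frac f2+\frac12)(f-1-d_1-d_2+N)(\frac32-\frac f2)}{(\frac f2+\frac12)(\frac f2-\frac32)-a_1(2f-2-d_1-d_2-a_1+N)},\qquad k=\frac{h(1+d_1+a_1-f)(1+d_2+a_1-f)}{d_1d_2-h(1+d_1+d_2+a_1-f)}.$$ Then $$ {}_{7}F_{6}\left[\begin{matrix} f-1,\ \frac f2+\frac32,\ a_1,\ d_1,\ d_2,\ 2f-2-d_1-d_2-a_1+N,\ -N\\ \frac f2-\frac32,\ f-a_1,\ f-d_1,\ f-d_2,\ 2+a_1+d_1+d_2-f-N,\ f+N\end{matrix};1\right]$$ $$=\frac{(f)_N\,(f-d_1-d_2)_N\,(f-a_1-d_1-1)_N\,(f-a_1-d_2-1)_N}{(f-d_1)_N\,(f-d_2)_N\,(f-a_1)_N\,(f-a_1-d_1-d_2-1)_N}\cdot\frac{(k+1)_N}{(k)_N}.$$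
   Context: $(x)_n$ denotes the Pochhammer symbol: $(x)_0=1$, $(x)_n=x(x+1)\cdots(x+n-1)$ for $n\ge1$. The generalized hypergeometric function is $${}_{r+1}F_{r}\left[\begin{matrix} a_1,\dots,a_{r+1}\\ b_1,\dots,b_r\end{matrix};z\right]=\sum_{n=0}^{\infty}\frac{(a_1)_n\cdots(a_{r+1})_n}{(b_1)_n\cdots(b_r)_n\,n!}z^n ,$$ where no $b_i$ is a nonpositive integer; when one upper parameter equals $-N$ with $N$ a nonnegative integer the series terminates. *)

theory Defs
  imports "HOL-Analysis.Analysis"
begin

text \<open>When an upper parameter is a nonpositive integer
  the terms vanish eventually and the series terminates.\<close>
definition hypergeom :: "complex list \<Rightarrow> complex list \<Rightarrow> complex \<Rightarrow> complex" where
  "hypergeom as bs z =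
     (\<Sum>n. (\<Prod>a\<leftarrow>as. pochhammer a n) / ((\<Prod>b\<leftarrow>bs. pochhammer b n) * fact n) * z ^ n)"

end

theory Submission
  imports Defs
begin

lemma notint_nz: fixes x y :: complex assumes "x \<notin> \<int>" "y - x \<in> \<int>" shows "y \<noteq> 0"
proof
  assume "y = 0" then have "-(y-x) = x" by simp
  with assms show False by (metis Ints_minus)
qed

lemma notint_poch: fixes x y :: complex assumes "x \<notin> \<int>" "y - x \<in> \<int>" shows "pochhammer y n \<noteq> 0"
proof -
  have "y + of_nat k \<noteq> 0" for k
    by (rule notint_nz[OF assms(1)]) (metis Ints_add Ints_of_nat add_diff_eq assms(2) diff_add_eq)
  then show ?thesis by (auto simp: pochhammer_eq_0_iff) (metis add.commute add.inverse_neutral add_eq_0_iff)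
qed



definition dT :: "complex \<Rightarrow> complex \<Rightarrow> complex \<Rightarrow> complex \<Rightarrow> complex \<Rightarrow> nat \<Rightarrow> complex" where
 "dT a b c d M n = pochhammer a n * pochhammer (1+a/2) n * pochhammer b n * pochhammer c n * pochhammer d n
    * pochhammer (1+2 * a-b-c-d+M) n * pochhammer (-M) n /
   (fact n * pochhammer (a/2) n * pochhammer (1+a-b) n * pochhammer (1+a-c) n * pochhammer (1+a-d) n
    * pochhammer (b+c+d-a-M) n * pochhammer (1+a+M) n)"

lemma poch_shift: "pochhammer (x::complex) n * (x + of_nat n) = x * pochhammer (x+1) n"
  by (metis pochhammer_rec pochhammer_rec' mult.commute)

lemma poch_shift': "y = x + 1 \<Longrightarrow> pochhammer (x::complex) n * (x + of_nat n) = x * pochhammer y n"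
  using poch_shift by simp

lemma sh1: "p * (x + y) = x * q \<Longrightarrow> x + y \<noteq> 0 \<Longrightarrow> p = x * q / (x + y)" for p x y q :: complex
  by (simp add: eq_divide_eq)
lemma sh2: "p * (x + y) = x * q \<Longrightarrow> x \<noteq> 0 \<Longrightarrow> q = p * (x + y) / x" for p x y q :: complex
  by (simp add: eq_divide_eq)

lemma dT_down:
  fixes a b c d M e :: complex and n :: nat
  assumes e: "e = 1+2 * a-b-c-d+M"
  assumes nz: "e + of_nat n \<noteq> 0" "a-e+ of_nat n \<noteq> 0" "M+1 \<noteq> 0" "1+a+M \<noteq> 0" "a-e \<noteq> 0"
    "pochhammer (a/2) n \<noteq> 0" "pochhammer (1+a-b) n \<noteq> 0" "pochhammer (1+a-c) n \<noteq> 0" "pochhammer (1+a-d) n \<noteq> 0"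
    "pochhammer (b+c+d-a-M) n \<noteq> 0" "pochhammer (b+c+d-a-(M+1)) n \<noteq> 0" "pochhammer (1+a+M) n \<noteq> 0" "pochhammer (1+a+(M+1)) n \<noteq> 0" "1+a+M+ of_nat n \<noteq> 0"
  shows "dT a b c d M n = dT a b c d (M+1) n * (e/(e+ of_nat n) * (M+1-of_nat n)/(M+1) * (a-e)/(a-e+ of_nat n) * (1+a+M+ of_nat n)/(1+a+M))"
proof -
  have X: "pochhammer e n * (e + of_nat n) = e * pochhammer (1+2 * a-b-c-d+(M+1)) n"
    by (rule poch_shift') (simp add: e)
  have Y: "pochhammer (-(M+1)) n * (-(M+1) + of_nat n) = -(M+1) * pochhammer (-M) n"
    by (rule poch_shift') simp
  have Z: "pochhammer (b+c+d-a-(M+1)) n * ((b+c+d-a-(M+1)) + of_nat n) = (b+c+d-a-(M+1)) * pochhammer (b+c+d-a-M) n"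
    by (rule poch_shift') simp
  have W: "pochhammer (1+a+M) n * ((1+a+M) + of_nat n) = (1+a+M) * pochhammer (1+a+(M+1)) n"
    by (rule poch_shift') simp
  have ae: "b+c+d-a-(M+1) = a - e" by (simp add: e)
  have X': "pochhammer e n = e * pochhammer (1+2 * a-b-c-d+(M+1)) n / (e + of_nat n)"
    using sh1[OF X nz(1)] .
  have Y': "pochhammer (-M) n = pochhammer (-(M+1)) n * (M+1-of_nat n) / (M+1)"
  proof -
    have m: "-(M+1) \<noteq> 0" "-M-1 \<noteq> 0" using nz(3) by (auto simp: algebra_simps minus_equation_iff[of M])
    have "pochhammer (-M) n = pochhammer (-(M+1)) n * (-(M+1) + of_nat n) / (-(M+1))"
      using sh2[OF Y m(1)] .
    also have "\<dots> = pochhammer (-(M+1)) n * (M+1-of_nat n) / (M+1)"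
      using m nz(3) by (simp add: field_simps)
    finally show ?thesis .
  qed
  have Z': "pochhammer (b+c+d-a-M) n = pochhammer (b+c+d-a-(M+1)) n * (a-e+ of_nat n) / (a-e)"
    using sh2[OF Z] nz(5) unfolding ae by (simp add: algebra_simps)
  have W': "pochhammer (1+a+M) n = (1+a+M) * pochhammer (1+a+(M+1)) n / (1+a+M+ of_nat n)"
    using sh1[OF W nz(14)] .
  show ?thesis
    unfolding dT_def e[symmetric] X' Y' Z' W'
    using nz by (simp add: field_simps)
qed

lemma dT_up:
  fixes a b c d M :: complex and n :: nat
  assumes nz: "pochhammer (a/2) n \<noteq> 0" "pochhammer (1+a-b) n \<noteq> 0" "pochhammer (1+a-c) n \<noteq> 0" "pochhammer (1+a-d) n \<noteq> 0"
    "pochhammer (b+c+d-a-M) n \<noteq> 0" "pochhammer (1+a+M) n \<noteq> 0"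
    "a/2+ of_nat n \<noteq> 0" "1+a-b+ of_nat n \<noteq> 0" "1+a-c+ of_nat n \<noteq> 0" "1+a-d+ of_nat n \<noteq> 0"
    "b+c+d-a-M+ of_nat n \<noteq> 0" "1+a+M+ of_nat n \<noteq> 0"
  shows "dT a b c d M (Suc n) = dT a b c d M n *
     ((a+ of_nat n) * (1+a/2+ of_nat n) * (b+ of_nat n) * (c+ of_nat n) * (d+ of_nat n) * (1+2 * a-b-c-d+M+ of_nat n) * (-M+ of_nat n) /
      ((of_nat n+1) * (a/2+ of_nat n) * (1+a-b+ of_nat n) * (1+a-c+ of_nat n) * (1+a-d+ of_nat n) * (b+c+d-a-M+ of_nat n) * (1+a+M+ of_nat n)))"
proof -
  have f: "fact n \<noteq> (0::complex)" by simp
  have n1: "of_nat n + 1 \<noteq> (0::complex)" by (metis of_nat_Suc of_nat_eq_0_iff add.commute nat.simps(3))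
  show ?thesis
    unfolding dT_def pochhammer_rec' fact_Suc
    using nz f n1 by (simp add: divide_simps ac_simps)
qed

lemma canc7: fixes A1 A2 A3 A4 A5 B1 B2 C1 C3 C4 C5 C7 D2 D6 :: complex
  assumes "A1 \<noteq> 0" "A2 \<noteq> 0" "A3 \<noteq> 0" "A4 \<noteq> 0" "A5 \<noteq> 0" "B1 \<noteq> 0" "B2 \<noteq> 0" "D2 \<noteq> 0" "D6 \<noteq> 0"
  shows "(A1 * A2 * A3 * A4 * A5/(B1 * B2)) * (C1 * B2 * C3 * C4 * C5 * B1 * C7/(A1 * D2 * A2 * A3 * A4 * D6 * A5)) = C1 * C3 * C4 * C5 * C7/(D2 * D6)"
  using assms by (simp add: field_simps)

lemma rr_canc:
  fixes a b c d M e x :: complex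
  assumes e: "e = 1+2 * a-b-c-d+M"
  assumes nz: "x+1 \<noteq> 0" "1+a-b+x \<noteq> 0" "1+a-c+x \<noteq> 0" "1+a-d+x \<noteq> 0" "1+a+(M+1)+x \<noteq> 0"
     "e+(x+1) \<noteq> 0" "a/2+(x+1) \<noteq> 0" "a/2+x \<noteq> 0" "b+c+d-a-(M+1)+x \<noteq> 0"
  shows "((x+1) * ((x+1)+a-b) * ((x+1)+a-c) * ((x+1)+a-d) * ((x+1)+1+a+M)/((e+(x+1)) * (a/2+(x+1)))) *
     ((a+x) * (1+a/2+x) * (b+x) * (c+x) * (d+x) * (1+2 * a-b-c-d+(M+1)+x) * (-(M+1)+x) /
      ((x+1) * (a/2+x) * (1+a-b+x) * (1+a-c+x) * (1+a-d+x) * (b+c+d-a-(M+1)+x) * (1+a+(M+1)+x)))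
   = (a+x) * (b+x) * (c+x) * (d+x) * (x-M-1)/((a/2+x) * (a-e+x))"
proof -
  have 1: "(x+1)+a-b = 1+a-b+x" "(x+1)+a-c = 1+a-c+x" "(x+1)+a-d = 1+a-d+x" "(x+1)+1+a+M = 1+a+(M+1)+x"
    "1+a/2+x = a/2+(x+1)" "1+2 * a-b-c-d+(M+1)+x = e+(x+1)" "-(M+1)+x = x-M-1" "b+c+d-a-(M+1)+x = a-e+x"
    by (simp_all add: e algebra_simps)
  show ?thesis unfolding 1
    by (rule canc7) (use nz 1 in simp_all)
qed

lemma g1: fixes p q r s y x1 x2 x3 x4 :: complex
  assumes "x1 \<noteq> 0" "x2 \<noteq> 0" "x3 \<noteq> 0" "x4 \<noteq> 0"
  shows "p/x1 * q/x2 * r/x3 * s/x4 * (x1 * x3 * y * x2 * x4) = p * q * r * s * y"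
  using assms by (simp add: field_simps)
lemma g2: fixes A z x1 x2 x3 x4 :: complex
  assumes "z \<noteq> 0" "x3 \<noteq> 0"
  shows "A/(z * x3) * (x1 * x3 * (2 * z) * x2 * x4) = 2 * A * x1 * x2 * x4"
  using assms by (simp add: field_simps)
lemma g3: fixes A z x1 x2 x3 x4 :: complex
  assumes "z \<noteq> 0" "x1 \<noteq> 0"
  shows "A/(x1 * z) * (x1 * x3 * (2 * z) * x2 * x4) = 2 * A * x3 * x2 * x4"
  using assms by (simp add: field_simps)

lemma dougall_key:
  fixes a b c d M n e P Q :: complex
  assumes e: "e = 1+2 * a-b-c-d+M"
  and P: "P = (1+a+M) * (1+a-b-c+M) * (1+a-b-d+M) * (1+a-c-d+M)"
  and Q: "Q = (1+a-b+M) * (1+a-c+M) * (1+a-d+M) * (1+a-b-c-d+M)"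
  and nz: "e+n \<noteq> 0" "a/2+n \<noteq> 0" "a-e+n \<noteq> 0" "M+1 \<noteq> 0" "1+a+M \<noteq> 0"
  shows "-2 * b * c * d * (M+1) * Q - (-2 * b * c * d * (M+1)) * P * (e/(e+n) * (M+1-n)/(M+1) * (a-e)/(a-e+n) * (1+a+M+n)/(1+a+M))
     = (Q-P) * (a-e) * ((a+n) * (b+n) * (c+n) * (d+n) * (n-M-1)/((a/2+n) * (a-e+n)) - n * (n+a-b) * (n+a-c) * (n+a-d) * (n+1+a+M)/((e+n) * (a/2+n)))"
proof -
  define E where "E = (e+n) * (a-e+n) * (2 * (a/2+n)) * (M+1) * (1+a+M)"
  have two: "2 * (a/2+n) = a+2 * n" by simp
  have a2: "a+2 * n \<noteq> 0" using nz(2) two by (metis mult_eq_0_iff zero_neq_numeral)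
  have E0: "E \<noteq> 0" using nz a2 unfolding E_def two by simp
  define c1 where "c1 = e/(e+n) * (M+1-n)/(M+1) * (a-e)/(a-e+n) * (1+a+M+n)/(1+a+M)"
  define X where "X = (a+n) * (b+n) * (c+n) * (d+n) * (n-M-1)/((a/2+n) * (a-e+n))"
  define r where "r = n * (n+a-b) * (n+a-c) * (n+a-d) * (n+1+a+M)/((e+n) * (a/2+n))"
  have c1E: "c1 * E = e * (M+1-n) * (a-e) * (1+a+M+n) * (a+2 * n)"
    unfolding c1_def E_def two[symmetric] by (rule g1) (use nz in auto)
  have XE: "X * E = 2 * ((a+n) * (b+n) * (c+n) * (d+n) * (n-M-1)) * (e+n) * (M+1) * (1+a+M)"
    unfolding X_def E_def by (rule g2) (use nz in auto)
  have rE: "r * E = 2 * (n * (n+a-b) * (n+a-c) * (n+a-d) * (n+1+a+M)) * (a-e+n) * (M+1) * (1+a+M)"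
    unfolding r_def E_def by (rule g3) (use nz in auto)
  have "(-2 * b * c * d * (M+1) * Q - (-2 * b * c * d * (M+1)) * P * c1) * E = (Q-P) * (a-e) * (X - r) * E"
  proof -
    have "(-2 * b * c * d * (M+1) * Q - (-2 * b * c * d * (M+1)) * P * c1) * E = -2 * b * c * d * (M+1) * Q * E + 2 * b * c * d * (M+1) * P * (c1 * E)"
      by (simp add: algebra_simps)
    also have "\<dots> = (Q-P) * (a-e) * (X * E - r * E)"
      unfolding c1E XE rE unfolding P Q E_def two e by algebra
    also have "\<dots> = (Q-P) * (a-e) * (X - r) * E" by (simp add: algebra_simps)
    finally show ?thesis .
  qed
  then show ?thesis using E0 unfolding c1_def X_def r_def by simp
qed

definition dOm :: "complex \<Rightarrow> complex \<Rightarrow> complex \<Rightarrow> complex \<Rightarrow> nat \<Rightarrow> complex" where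
 "dOm a b c d N = pochhammer (1+a) N * pochhammer (1+a-b-c) N * pochhammer (1+a-b-d) N * pochhammer (1+a-c-d) N /
   (pochhammer (1+a-b) N * pochhammer (1+a-c) N * pochhammer (1+a-d) N * pochhammer (1+a-b-c-d) N)"

definition dgen :: "complex \<Rightarrow> complex \<Rightarrow> complex \<Rightarrow> complex \<Rightarrow> bool" where
 "dgen a b c d \<longleftrightarrow> a \<notin> \<int> \<and> a/2 \<notin> \<int> \<and> a-b \<notin> \<int> \<and> a-c \<notin> \<int> \<and> a-d \<notin> \<int> \<and> b+c+d-a \<notin> \<int>
    \<and> a-b-c-d \<notin> \<int> \<and> 2 * a-b-c-d \<notin> \<int> \<and> b \<notin> \<int> \<and> c \<notin> \<int> \<and> d \<notin> \<int>"

definition rr :: "complex \<Rightarrow> complex \<Rightarrow> complex \<Rightarrow> complex \<Rightarrow> complex \<Rightarrow> complex \<Rightarrow> complex" where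
 "rr a b c d M x = x * (x+a-b) * (x+a-c) * (x+a-d) * (x+1+a+M)/(((1+2 * a-b-c-d+M)+x) * (a/2+x))"

definition dP where "dP a b c d M = (1+a+M) * (1+a-b-c+M) * (1+a-b-d+M) * (1+a-c-d+M)"
definition dQ where "dQ a b c d M = (1+a-b+M) * (1+a-c+M) * (1+a-d+M) * (1+a-b-c-d+M)"

definition gg :: "complex \<Rightarrow> complex \<Rightarrow> complex \<Rightarrow> complex \<Rightarrow> complex \<Rightarrow> nat \<Rightarrow> complex" where
 "gg a b c d M n = (dQ a b c d M - dP a b c d M) * (a - (1+2 * a-b-c-d+M)) * rr a b c d M (of_nat n) * dT a b c d (M+1) n"

lemma fin_ab: fixes w q p c k X r t :: complex
  assumes h: "w * q - w * p * c = k * (X - r)"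
  shows "w * q * t - w * p * (t * c) = k * X * t - k * r * t"
proof -
  have "w * q * t - w * p * (t * c) = (w * q - w * p * c) * t" by (simp add: algebra_simps)
  also have "\<dots> = k * (X - r) * t" by (simp add: h)
  also have "\<dots> = k * X * t - k * r * t" by (simp add: algebra_simps)
  finally show ?thesis .
qed

lemma dT_tele:
  fixes a b c d :: complex and N n :: nat
  assumes g: "dgen a b c d"
  shows "-2 * b * c * d * (of_nat N+1) * dQ a b c d (of_nat N) * dT a b c d (of_nat N+1) n
         - (-2 * b * c * d * (of_nat N+1)) * dP a b c d (of_nat N) * dT a b c d (of_nat N) n
       = gg a b c d (of_nat N) (Suc n) - gg a b c d (of_nat N) n"
proof -
  define M :: complex where "M = of_nat N"
  define e where "e = 1+2 * a-b-c-d+M"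
  define x :: complex where "x = of_nat n"
  note G = g[unfolded dgen_def]
  have M1: "M+1 \<noteq> 0" unfolding M_def by (metis of_nat_Suc of_nat_eq_0_iff add.commute nat.simps(3))
  have x1: "x+1 \<noteq> 0" unfolding x_def by (metis of_nat_Suc of_nat_eq_0_iff add.commute nat.simps(3))
  have nz1_1: "e + x \<noteq> 0"
    by (rule notint_nz[of "2 * a-b-c-d"]) (use G in \<open>simp_all add: e_def M_def x_def\<close>)
  have nz1_2: "e + (x+1) \<noteq> 0"
    by (rule notint_nz[of "2 * a-b-c-d"]) (use G in \<open>simp_all add: e_def M_def x_def\<close>)
  note nz1 = nz1_1 nz1_2
  have nz2_1: "a-e+x \<noteq> 0"
    by (rule notint_nz[of "b+c+d-a"]) (use G in \<open>simp_all add: e_def M_def x_def\<close>)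
  have nz2_2: "a-e \<noteq> 0"
    by (rule notint_nz[of "b+c+d-a"]) (use G in \<open>simp_all add: e_def M_def x_def\<close>)
  have nz2_3: "b+c+d-a-(M+1)+x \<noteq> 0"
    by (rule notint_nz[of "b+c+d-a"]) (use G in \<open>simp_all add: e_def M_def x_def\<close>)
  note nz2 = nz2_1 nz2_2 nz2_3
  have nz3_1: "1+a+M \<noteq> 0"
    by (rule notint_nz[of "a"]) (use G in \<open>simp_all add: e_def M_def x_def\<close>)
  have nz3_2: "1+a+M+x \<noteq> 0"
    by (rule notint_nz[of "a"]) (use G in \<open>simp_all add: e_def M_def x_def\<close>)
  have nz3_3: "1+a+(M+1)+x \<noteq> 0"
    by (rule notint_nz[of "a"]) (use G in \<open>simp_all add: e_def M_def x_def\<close>)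
  note nz3 = nz3_1 nz3_2 nz3_3
  have nz4_1: "a/2+x \<noteq> 0"
    by (rule notint_nz[of "a/2"]) (use G in \<open>simp_all add: e_def M_def x_def\<close>)
  have nz4_2: "a/2+(x+1) \<noteq> 0"
    by (rule notint_nz[of "a/2"]) (use G in \<open>simp_all add: e_def M_def x_def\<close>)
  note nz4 = nz4_1 nz4_2
  have nz5: "1+a-b+x \<noteq> 0" by (rule notint_nz[of "a-b"], use G in \<open>simp_all add: x_def\<close>)
  have nz6: "1+a-c+x \<noteq> 0" by (rule notint_nz[of "a-c"], use G in \<open>simp_all add: x_def\<close>)
  have nz7: "1+a-d+x \<noteq> 0" by (rule notint_nz[of "a-d"], use G in \<open>simp_all add: x_def\<close>)
  have p1: "pochhammer (a/2) n \<noteq> 0" by (rule notint_poch[of "a/2"], use G in simp_all)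
  have p2: "pochhammer (1+a-b) n \<noteq> 0" by (rule notint_poch[of "a-b"], use G in simp_all)
  have p3: "pochhammer (1+a-c) n \<noteq> 0" by (rule notint_poch[of "a-c"], use G in simp_all)
  have p4: "pochhammer (1+a-d) n \<noteq> 0" by (rule notint_poch[of "a-d"], use G in simp_all)
  have p5_1: "pochhammer (b+c+d-a-M) n \<noteq> 0"
    by (rule notint_poch[of "b+c+d-a"]) (use G in \<open>simp_all add: M_def\<close>)
  have p5_2: "pochhammer (b+c+d-a-(M+1)) n \<noteq> 0"
    by (rule notint_poch[of "b+c+d-a"]) (use G in \<open>simp_all add: M_def\<close>)
  note p5 = p5_1 p5_2
  have p6_1: "pochhammer (1+a+M) n \<noteq> 0"
    by (rule notint_poch[of "a"]) (use G in \<open>simp_all add: M_def\<close>)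
  have p6_2: "pochhammer (1+a+(M+1)) n \<noteq> 0"
    by (rule notint_poch[of "a"]) (use G in \<open>simp_all add: M_def\<close>)
  note p6 = p6_1 p6_2
  have down: "dT a b c d M n = dT a b c d (M+1) n * (e/(e+x) * (M+1-x)/(M+1) * (a-e)/(a-e+x) * (1+a+M+x)/(1+a+M))"
    unfolding x_def by (rule dT_down[OF e_def]) (use nz1 nz2 nz3 M1 p1 p2 p3 p4 p5 p6 in \<open>simp_all add: x_def\<close>)
  have up: "dT a b c d (M+1) (Suc n) = dT a b c d (M+1) n *
     ((a+x) * (1+a/2+x) * (b+x) * (c+x) * (d+x) * (1+2 * a-b-c-d+(M+1)+x) * (-(M+1)+x) /
      ((x+1) * (a/2+x) * (1+a-b+x) * (1+a-c+x) * (1+a-d+x) * (b+c+d-a-(M+1)+x) * (1+a+(M+1)+x)))"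
    unfolding x_def by (rule dT_up) (use nz2 nz3 nz4 nz5 nz6 nz7 p1 p2 p3 p4 p5 p6 in \<open>simp_all add: x_def\<close>)
  have canc: "rr a b c d M (x+1) * ((a+x) * (1+a/2+x) * (b+x) * (c+x) * (d+x) * (1+2 * a-b-c-d+(M+1)+x) * (-(M+1)+x) /
      ((x+1) * (a/2+x) * (1+a-b+x) * (1+a-c+x) * (1+a-d+x) * (b+c+d-a-(M+1)+x) * (1+a+(M+1)+x)))
     = (a+x) * (b+x) * (c+x) * (d+x) * (x-M-1)/((a/2+x) * (a-e+x))"
    unfolding rr_def e_def[symmetric] by (rule rr_canc[OF e_def]) (use x1 nz1 nz2 nz3 nz4 nz5 nz6 nz7 in auto)
  have key: "-2 * b * c * d * (M+1) * dQ a b c d M - (-2 * b * c * d * (M+1)) * dP a b c d M * (e/(e+x) * (M+1-x)/(M+1) * (a-e)/(a-e+x) * (1+a+M+x)/(1+a+M))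
     = (dQ a b c d M - dP a b c d M) * (a-e) * ((a+x) * (b+x) * (c+x) * (d+x) * (x-M-1)/((a/2+x) * (a-e+x)) - x * (x+a-b) * (x+a-c) * (x+a-d) * (x+1+a+M)/((e+x) * (a/2+x)))"
    by (rule dougall_key[OF e_def]) (use nz1 nz2 nz3 nz4 M1 in \<open>simp_all add: dP_def dQ_def\<close>)
  have sx: "of_nat (Suc n) = x + 1" by (simp add: x_def)
  have ggS: "gg a b c d M (Suc n) = (dQ a b c d M - dP a b c d M) * (a-e) * ((a+x) * (b+x) * (c+x) * (d+x) * (x-M-1)/((a/2+x) * (a-e+x))) * dT a b c d (M+1) n"
    unfolding gg_def sx up e_def[symmetric] canc[symmetric] by (simp add: ac_simps)
  have gg0: "gg a b c d M n = (dQ a b c d M - dP a b c d M) * (a-e) * (x * (x+a-b) * (x+a-c) * (x+a-d) * (x+1+a+M)/((e+x) * (a/2+x))) * dT a b c d (M+1) n"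
    unfolding gg_def rr_def e_def x_def by simp
  show ?thesis
    unfolding M_def[symmetric] ggS gg0 down
    by (rule fin_ab[OF key])
qed

lemma dOm_Suc:
  fixes a b c d :: complex and N :: nat
  assumes nz: "pochhammer (1+a-b) N \<noteq> 0" "pochhammer (1+a-c) N \<noteq> 0" "pochhammer (1+a-d) N \<noteq> 0"
    "pochhammer (1+a-b-c-d) N \<noteq> 0" "dQ a b c d (of_nat N) \<noteq> 0"
  shows "dOm a b c d (Suc N) = dOm a b c d N * dP a b c d (of_nat N) / dQ a b c d (of_nat N)"
  using nz unfolding dOm_def dP_def dQ_def pochhammer_Suc by (simp add: divide_simps ac_simps)

lemma dT_zero: "n > N \<Longrightarrow> dT a b c d (of_nat N) n = 0"
  unfolding dT_def by (auto simp: pochhammer_eq_0_iff)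

lemma solve_lin: fixes w q S p Om :: complex
  assumes "w * q * S = w * p * Om" "w \<noteq> 0" "q \<noteq> 0" shows "S = Om * p/q"
  using assms by (simp add: field_simps)

theorem dougall:
  fixes a b c d :: complex and N :: nat
  assumes g: "dgen a b c d"
  shows "(\<Sum>n<Suc N. dT a b c d (of_nat N) n) = dOm a b c d N"
proof (induction N)
  case 0
  then show ?case by (simp add: dT_def dOm_def)
next
  case (Suc N)
  define M :: complex where "M = of_nat N"
  note G = g[unfolded dgen_def]
  have sN: "of_nat (Suc N) = M + 1" by (simp add: M_def)
  have tele: "-2 * b * c * d * (M+1) * dQ a b c d M * dT a b c d (M+1) n
         - (-2 * b * c * d * (M+1)) * dP a b c d M * dT a b c d M n
       = gg a b c d M (Suc n) - gg a b c d M n" for n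
    unfolding M_def by (rule dT_tele[OF g])
  have "(\<Sum>n<Suc (Suc N). -2 * b * c * d * (M+1) * dQ a b c d M * dT a b c d (M+1) n
         - (-2 * b * c * d * (M+1)) * dP a b c d M * dT a b c d M n) = gg a b c d M (Suc (Suc N)) - gg a b c d M 0"
    unfolding tele by (rule sum_lessThan_telescope)
  also have "gg a b c d M 0 = 0" by (simp add: gg_def rr_def)
  also have "gg a b c d M (Suc (Suc N)) = 0"
  proof -
    have "dT a b c d (of_nat (Suc N)) (Suc (Suc N)) = 0" by (rule dT_zero) simp
    then show ?thesis unfolding gg_def sN by simp
  qed
  finally have "(\<Sum>n<Suc (Suc N). -2 * b * c * d * (M+1) * dQ a b c d M * dT a b c d (M+1) n
         - (-2 * b * c * d * (M+1)) * dP a b c d M * dT a b c d M n) = 0" by simp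
  moreover have "(\<Sum>n<Suc (Suc N). -2 * b * c * d * (M+1) * dQ a b c d M * dT a b c d (M+1) n
         - (-2 * b * c * d * (M+1)) * dP a b c d M * dT a b c d M n) =
       -2 * b * c * d * (M+1) * dQ a b c d M * (\<Sum>n<Suc (Suc N). dT a b c d (M+1) n)
       - (-2 * b * c * d * (M+1)) * dP a b c d M * (\<Sum>n<Suc (Suc N). dT a b c d M n)"
    by (simp only: sum_subtractf sum_distrib_left)
  ultimately have "-2 * b * c * d * (M+1) * dQ a b c d M * (\<Sum>n<Suc (Suc N). dT a b c d (M+1) n)
       = (-2 * b * c * d * (M+1)) * dP a b c d M * (\<Sum>n<Suc (Suc N). dT a b c d M n)"
    by (simp only: right_minus_eq)
  also have "(\<Sum>n<Suc (Suc N). dT a b c d M n) = (\<Sum>n<Suc N. dT a b c d M n)"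
    using dT_zero[of N "Suc N" a b c d] by (simp add: M_def)
  also have "\<dots> = dOm a b c d N" using Suc by (simp add: M_def)
  finally have E: "-2 * b * c * d * (M+1) * dQ a b c d M * (\<Sum>n<Suc (Suc N). dT a b c d (M+1) n)
       = (-2 * b * c * d * (M+1)) * dP a b c d M * dOm a b c d N" .
  have M1: "M+1 \<noteq> 0" unfolding M_def by (metis of_nat_Suc of_nat_eq_0_iff add.commute nat.simps(3))
  have b0: "b \<noteq> 0" by (rule notint_nz[of b]) (use G in simp_all)
  have c0: "c \<noteq> 0" by (rule notint_nz[of c]) (use G in simp_all)
  have d0: "d \<noteq> 0" by (rule notint_nz[of d]) (use G in simp_all)
  have q1: "1+a-b+M \<noteq> 0" by (rule notint_nz[of "a-b"]) (use G in \<open>simp_all add: M_def\<close>)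
  have q2: "1+a-c+M \<noteq> 0" by (rule notint_nz[of "a-c"]) (use G in \<open>simp_all add: M_def\<close>)
  have q3: "1+a-d+M \<noteq> 0" by (rule notint_nz[of "a-d"]) (use G in \<open>simp_all add: M_def\<close>)
  have q4: "1+a-b-c-d+M \<noteq> 0" by (rule notint_nz[of "a-b-c-d"]) (use G in \<open>simp_all add: M_def\<close>)
  have Q0: "dQ a b c d M \<noteq> 0" using q1 q2 q3 q4 by (simp add: dQ_def)
  have pp1: "pochhammer (1+a-b) N \<noteq> 0" by (rule notint_poch[of "a-b"]) (use G in simp_all)
  have pp2: "pochhammer (1+a-c) N \<noteq> 0" by (rule notint_poch[of "a-c"]) (use G in simp_all)
  have pp3: "pochhammer (1+a-d) N \<noteq> 0" by (rule notint_poch[of "a-d"]) (use G in simp_all)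
  have pp4: "pochhammer (1+a-b-c-d) N \<noteq> 0" by (rule notint_poch[of "a-b-c-d"]) (use G in simp_all)
  have W0: "-2 * b * c * d * (M+1) \<noteq> 0" using b0 c0 d0 M1 by simp
  have "(\<Sum>n<Suc (Suc N). dT a b c d (M+1) n) = dOm a b c d N * dP a b c d M / dQ a b c d M"
    using solve_lin[OF E W0 Q0] .
  also have "\<dots> = dOm a b c d (Suc N)"
    using dOm_Suc[OF pp1 pp2 pp3 pp4] Q0 by (simp add: M_def)
  finally show ?case unfolding sN .
qed

definition hterm :: "complex list \<Rightarrow> complex list \<Rightarrow> nat \<Rightarrow> complex" where
  "hterm as bs n = (\<Prod>a\<leftarrow>as. pochhammer a n) / ((\<Prod>b\<leftarrow>bs. pochhammer b n) * fact n)"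

lemma notint_shift: fixes x y :: complex assumes "x \<notin> \<int>" "y - x \<in> \<int>" shows "y \<notin> \<int>"
proof
  assume "y \<in> \<int>" then have "y - (y - x) \<in> \<int>" using assms(2) by (rule Ints_diff)
  with assms(1) show False by simp
qed

lemma psh_up: fixes x :: complex assumes "x \<noteq> 0"
  shows "pochhammer (x+1) n = pochhammer x n * (x + of_nat n) / x"
  using poch_shift[of x n] assms by (simp add: field_simps)

lemma psh_down: fixes x :: complex assumes "x + of_nat n \<noteq> 0"
  shows "pochhammer x n = pochhammer (x+1) n * x / (x + of_nat n)"
  using poch_shift[of x n] assms by (simp add: field_simps)

lemma gl_abs: fixes A p q Z W v x y :: complex
  assumes "A = p * q" "p \<noteq> 0" "q \<noteq> 0"
  shows "A * Z/W * (v * x/p * y/q) = v * (Z * (x * y)/W)"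
  using assms by (simp add: field_simps)

lemma gl_sum: fixes v Z1 X1 Z2 X2 W Y s D :: complex
  assumes "Z1 * X1 + Z2 * X2 = D * Y" "W = s * D" "D \<noteq> 0"
  shows "v * (Z1 * X1/W) + v * (Z2 * X2/W) = v * Y/s"
proof -
  have "v * (Z1 * X1/W) + v * (Z2 * X2/W) = v * (Z1 * X1 + Z2 * X2)/W" by (simp add: add_divide_distrib distrib_left)
  also have "\<dots> = v * (D * Y)/(s * D)" using assms(1,2) by simp
  also have "\<dots> = v * Y/s" using assms(3) by simp
  finally show ?thesis .
qed

lemma wdecomp:
  fixes u a1 d1 n s A B al be :: complex
  assumes s: "s = (u-1) * (u+1)" and A: "A = a1 * (2 * u-a1)" and B: "B = d1 * (2 * u-d1)"
    and al: "al = A * (B-s)/(s * (B-A))" and be: "be = B * (s-A)/(s * (B-A))"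
    and nz: "u \<noteq> 0" "u+1 \<noteq> 0" "u-1 \<noteq> 0" "a1 \<noteq> 0" "d1 \<noteq> 0" "2 * u-a1 \<noteq> 0" "2 * u-d1 \<noteq> 0" "B-A \<noteq> 0"
  shows "(u+n) * (u+1+n) * (u-1+n)/(u * (u+1) * (u-1)) =
     al * ((u+n)/u * (a1+n)/a1 * (2 * u-a1+n)/(2 * u-a1)) + be * ((u+n)/u * (d1+n)/d1 * (2 * u-d1+n)/(2 * u-d1))"
proof -
  have h1: "(B-s) * ((a1+n) * (2 * u-a1+n)) + (s-A) * ((d1+n) * (2 * u-d1+n)) = (B-A) * ((u-1+n) * (u+1+n))"
    unfolding A B s by algebra
  have "al * ((u+n)/u * (a1+n)/a1 * (2 * u-a1+n)/(2 * u-a1)) + be * ((u+n)/u * (d1+n)/d1 * (2 * u-d1+n)/(2 * u-d1))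
     = (u+n)/u * ((B-s) * ((a1+n) * (2 * u-a1+n))/(s * (B-A))) + (u+n)/u * ((s-A) * ((d1+n) * (2 * u-d1+n))/(s * (B-A)))"
    unfolding al be by (simp only: gl_abs[OF A nz(4) nz(6)] gl_abs[OF B nz(5) nz(7)])
  also have "\<dots> = (u+n)/u * ((u-1+n) * (u+1+n))/s"
    by (rule gl_sum[OF h1 refl nz(8)])
  also have "\<dots> = (u+n) * (u+1+n) * (u-1+n)/(u * (u+1) * (u-1))"
    unfolding s using nz by (simp add: field_simps)
  finally show ?thesis ..
qed

lemma H_abs: fixes p1 P32 p3 p4 p5 p6 p7 Q32 q2 q3 q4 q5 q6 fn pu u x :: complex
  assumes "P32 = pu * (u+x)/u * (u+1+x)/(u+1)" "Q32 = pu * (u-1)/(u-1+x)"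
    "pu \<noteq> 0" "u \<noteq> 0" "u+1 \<noteq> 0" "u-1 \<noteq> 0" "u-1+x \<noteq> 0" "q2 \<noteq> 0" "q3 \<noteq> 0" "q4 \<noteq> 0" "q5 \<noteq> 0" "q6 \<noteq> 0" "fn \<noteq> 0"
  shows "(p1 * (P32 * (p3 * (p4 * (p5 * (p6 * (p7 * 1))))))) / ((Q32 * (q2 * (q3 * (q4 * (q5 * (q6 * 1)))))) * fn)
    = (p1 * p3 * p4 * p5 * p6 * p7/(fn * q2 * q3 * q4 * q5 * q6)) * ((u+x) * (u+1+x) * (u-1+x)/(u * (u+1) * (u-1)))"
  unfolding assms(1,2) using assms(3-) by (simp add: divide_simps)

lemma D1_abs: fixes pa P1 Pb pc pd pe pM fn pu Pab pac pad pl pam pb0 pab0 u x b0 y0 :: complex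
  assumes "P1 = pu * (u+x)/u" "Pb = pb0 * (b0+x)/b0" "Pab = pab0 * y0/(y0+x)"
    "pu \<noteq> 0" "u \<noteq> 0" "b0 \<noteq> 0" "y0 \<noteq> 0" "y0+x \<noteq> 0" "pab0 \<noteq> 0" "pac \<noteq> 0" "pad \<noteq> 0" "pl \<noteq> 0" "pam \<noteq> 0" "fn \<noteq> 0"
  shows "pa * P1 * Pb * pc * pd * pe * pM / (fn * pu * Pab * pac * pad * pl * pam)
    = pa * pb0 * pc * pd * pe * pM/(fn * pab0 * pac * pad * pl * pam) * ((u+x)/u * (b0+x)/b0 * (y0+x)/y0)"
  unfolding assms(1-3) using assms(4-) by (simp add: divide_simps)

lemma D2_abs: fixes pa P1 pb Pc pd pe pM fn pu pab Pac pad pl pam pc0 pac0 u x c0 y0 :: complex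
  assumes "P1 = pu * (u+x)/u" "Pc = pc0 * (c0+x)/c0" "Pac = pac0 * y0/(y0+x)"
    "pu \<noteq> 0" "u \<noteq> 0" "c0 \<noteq> 0" "y0 \<noteq> 0" "y0+x \<noteq> 0" "pab \<noteq> 0" "pac0 \<noteq> 0" "pad \<noteq> 0" "pl \<noteq> 0" "pam \<noteq> 0" "fn \<noteq> 0"
  shows "pa * P1 * pb * Pc * pd * pe * pM / (fn * pu * pab * Pac * pad * pl * pam)
    = pa * pb * pc0 * pd * pe * pM/(fn * pab * pac0 * pad * pl * pam) * ((u+x)/u * (c0+x)/c0 * (y0+x)/y0)"
  unfolding assms(1-3) using assms(4-) by (simp add: divide_simps)

lemma term_decomp:
  fixes f a1 d1 d2 u s A B al be :: complex and N n :: nat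
  assumes u: "u = (f-1)/2" and s: "s = (u-1) * (u+1)" and A: "A = a1 * (2 * u-a1)" and B: "B = d1 * (2 * u-d1)"
    and al: "al = A * (B-s)/(s * (B-A))" and be: "be = B * (s-A)/(s * (B-A))"
    and nz: "u \<noteq> 0" "u+1 \<noteq> 0" "u-1 \<noteq> 0" "a1 \<noteq> 0" "d1 \<noteq> 0" "2 * u-a1 \<noteq> 0" "2 * u-d1 \<noteq> 0" "B-A \<noteq> 0"
      "u-1+ of_nat n \<noteq> 0" "2 * u-a1+ of_nat n \<noteq> 0" "2 * u-d1+ of_nat n \<noteq> 0"
    and pz: "pochhammer u n \<noteq> 0" "pochhammer (f-a1) n \<noteq> 0" "pochhammer (f-d1) n \<noteq> 0" "pochhammer (f-d2) n \<noteq> 0"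
      "pochhammer (2 + a1 + d1 + d2 - f - of_nat N) n \<noteq> 0" "pochhammer (f + of_nat N) n \<noteq> 0"
  shows "hterm [f - 1, f/2 + 3/2, a1, d1, d2, 2 * f - 2 - d1 - d2 - a1 + of_nat N, - of_nat N]
                   [f/2 - 3/2, f - a1, f - d1, f - d2, 2 + a1 + d1 + d2 - f - of_nat N, f + of_nat N] n
      = al * dT (f-1) (a1+1) d1 d2 (of_nat N) n + be * dT (f-1) a1 (d1+1) d2 (of_nat N) n"
proof -
  define M :: complex where "M = of_nat N"
  define x :: complex where "x = of_nat n"
  define Base where "Base = pochhammer (f-1) n * pochhammer a1 n * pochhammer d1 n * pochhammer d2 n
     * pochhammer (2 * f - 2 - d1 - d2 - a1 + M) n * pochhammer (-M) n /
     (fact n * pochhammer (f-a1) n * pochhammer (f-d1) n * pochhammer (f-d2) n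
     * pochhammer (2 + a1 + d1 + d2 - f - M) n * pochhammer (f + M) n)"
  have fz: "fact n \<noteq> (0::complex)" by simp
  have R32: "pochhammer (f/2 + 3/2) n = pochhammer u n * (u+x)/u * (u+1+x)/(u+1)"
  proof -
    have "f/2 + 3/2 = (u+1)+1" by (simp add: u field_simps)
    then have "pochhammer (f/2 + 3/2) n = pochhammer (u+1) n * (u+1+x)/(u+1)"
      using psh_up[OF nz(2), of n] by (simp add: x_def)
    also have "pochhammer (u+1) n = pochhammer u n * (u+x)/u"
      using psh_up[OF nz(1), of n] by (simp add: x_def)
    finally show ?thesis by simp
  qed
  have Rm32: "pochhammer (f/2 - 3/2) n = pochhammer u n * (u-1)/(u-1+x)"
  proof -
    have e1: "f/2 - 3/2 = u-1" by (simp add: u field_simps)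
    have "pochhammer (u-1) n = pochhammer (u-1+1) n * (u-1)/(u-1+x)"
      using psh_down[of "u-1" n] nz(9) by (simp add: x_def)
    then show ?thesis unfolding e1 by simp
  qed
  have um: "u-1 \<noteq> 0" "u-1+x \<noteq> 0" using nz(3,9) by (simp_all add: x_def)
  have H: "hterm [f - 1, f/2 + 3/2, a1, d1, d2, 2 * f - 2 - d1 - d2 - a1 + of_nat N, - of_nat N]
                   [f/2 - 3/2, f - a1, f - d1, f - d2, 2 + a1 + d1 + d2 - f - of_nat N, f + of_nat N] n
     = Base * ((u+x) * (u+1+x) * (u-1+x)/(u * (u+1) * (u-1)))"
    unfolding hterm_def M_def[symmetric] Base_def
    apply (simp only: list.map prod_list.Cons prod_list.Nil)
    by (rule H_abs[OF R32 Rm32]) (use pz[unfolded M_def[symmetric]] fz nz(1,2) um in auto)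
  have D1: "dT (f-1) (a1+1) d1 d2 M n = Base * ((u+x)/u * (a1+x)/a1 * (2 * u-a1+x)/(2 * u-a1))"
  proof -
    have e: "1 + (f-1)/2 = u+1" "1+2 * (f-1)-(a1+1)-d1-d2+M = 2 * f - 2 - d1 - d2 - a1 + M"
      "1+(f-1)-(a1+1) = 2 * u-a1" "1+(f-1)-d1 = f-d1" "1+(f-1)-d2 = f-d2"
      "(a1+1)+d1+d2-(f-1)-M = 2 + a1 + d1 + d2 - f - M" "1+(f-1)+M = f+M"
      by (simp_all add: u field_simps)
    have e2: "(f-1)/2 = u" by (simp add: u)
    have r1: "pochhammer (u+1) n = pochhammer u n * (u+x)/u" using psh_up[OF nz(1), of n] by (simp add: x_def)
    have r2: "pochhammer (a1+1) n = pochhammer a1 n * (a1+x)/a1" using psh_up[OF nz(4), of n] by (simp add: x_def)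
    have r3: "pochhammer (2 * u-a1) n = pochhammer (f-a1) n * (2 * u-a1)/(2 * u-a1+x)"
    proof -
      have eq: "2 * u-a1+1 = f-a1" by (simp add: u field_simps)
      show ?thesis using psh_down[of "2 * u-a1" n, unfolded eq] nz(10) by (simp add: x_def)
    qed
    have xx: "2 * u-a1+x \<noteq> 0" using nz(10) by (simp add: x_def)
    show ?thesis
      unfolding dT_def unfolding e unfolding e2 Base_def
      by (rule D1_abs[OF r1 r2 r3]) (use pz[unfolded M_def[symmetric]] fz nz(1,4,6) xx in auto)
  qed
  have D2: "dT (f-1) a1 (d1+1) d2 M n = Base * ((u+x)/u * (d1+x)/d1 * (2 * u-d1+x)/(2 * u-d1))"
  proof -
    have e: "1 + (f-1)/2 = u+1" "1+2 * (f-1)-a1-(d1+1)-d2+M = 2 * f - 2 - d1 - d2 - a1 + M"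
      "1+(f-1)-a1 = f-a1" "1+(f-1)-(d1+1) = 2 * u-d1" "1+(f-1)-d2 = f-d2"
      "a1+(d1+1)+d2-(f-1)-M = 2 + a1 + d1 + d2 - f - M" "1+(f-1)+M = f+M"
      by (simp_all add: u field_simps)
    have e2: "(f-1)/2 = u" by (simp add: u)
    have r1: "pochhammer (u+1) n = pochhammer u n * (u+x)/u" using psh_up[OF nz(1), of n] by (simp add: x_def)
    have r2: "pochhammer (d1+1) n = pochhammer d1 n * (d1+x)/d1" using psh_up[OF nz(5), of n] by (simp add: x_def)
    have r3: "pochhammer (2 * u-d1) n = pochhammer (f-d1) n * (2 * u-d1)/(2 * u-d1+x)"
    proof -
      have eq: "2 * u-d1+1 = f-d1" by (simp add: u field_simps)
      show ?thesis using psh_down[of "2 * u-d1" n, unfolded eq] nz(11) by (simp add: x_def)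
    qed
    have xx: "2 * u-d1+x \<noteq> 0" using nz(11) by (simp add: x_def)
    show ?thesis
      unfolding dT_def unfolding e unfolding e2 Base_def
      by (rule D2_abs[OF r1 r2 r3]) (use pz[unfolded M_def[symmetric]] fz nz(1,5,7) xx in auto)
  qed
  have W: "(u+x) * (u+1+x) * (u-1+x)/(u * (u+1) * (u-1)) =
     al * ((u+x)/u * (a1+x)/a1 * (2 * u-a1+x)/(2 * u-a1)) + be * ((u+x)/u * (d1+x)/d1 * (2 * u-d1+x)/(2 * u-d1))"
    by (rule wdecomp[OF s A B al be nz(1-8)])
  have fin: "Bs * (p * r1 + q * r2) = p * (Bs * r1) + q * (Bs * r2)" for Bs p q r1 r2 :: complex
    by (simp add: algebra_simps)
  show ?thesis unfolding H unfolding M_def[symmetric] D1 D2 W by (rule fin)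
qed

lemma abs_k: fixes h n d k x1 x2 c y :: complex
  assumes "h = n/d" "d \<noteq> 0" "k = h * x1 * x2/(c - h * y)" "c - h * y \<noteq> 0"
  shows "k = n * (x1 * x2)/(c * d - n * y)"
proof -
  have "c * d - n * y = (c - h * y) * d" using assms(1,2) by (simp add: field_simps)
  then have cd: "c * d - n * y \<noteq> 0" using assms(2,4) by simp
  have "k = (n/d) * x1 * x2/(c - (n/d) * y)" using assms(1,3) by simp
  also have "\<dots> = n * (x1 * x2)/(c * d - n * y)" using assms(2) cd by (simp add: field_simps)
  finally show ?thesis .
qed

lemma abs_kM: fixes k nx D M :: complex
  assumes "k = nx/D" "k \<noteq> 0"
  shows "(k+M)/k = (nx + M * D)/nx"
proof -
  have "nx \<noteq> 0" "D \<noteq> 0" using assms by auto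
  then show ?thesis unfolding assms(1) by (simp add: field_simps)
qed

lemma q4: "(x/4)/(y/4) = x/(y::complex)" by (simp add: divide_divide_eq_right)

lemma two_frac: fixes X S p q Y r Q :: complex
  assumes "S \<noteq> 0" "q \<noteq> 0" "Q \<noteq> 0"
  shows "X/S * (p/q) + Y/S * (r/Q) = (X * p * Q + Y * r * q)/(S * q * Q)"
  using assms by (simp add: field_simps)

lemma abs_al: fixes al A B s s4 :: complex
  assumes "al = A * (B - s)/(s * (B-A))" "s = s4/4"
  shows "al = A * (4 * B - s4)/(s4 * (B-A))"
proof -
  have e1: "A * (B - s4/4) = (A * (4 * B-s4))/4" by (simp add: field_simps)
  have e2: "s4/4 * (B-A) = (s4 * (B-A))/4" by simp
  show ?thesis unfolding assms(1) assms(2) e1 e2 q4 ..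
qed

lemma abs_be: fixes be A B s s4 :: complex
  assumes "be = B * (s - A)/(s * (B-A))" "s = s4/4"
  shows "be = B * (s4 - 4 * A)/(s4 * (B-A))"
proof -
  have e1: "B * (s4/4 - A) = (B * (s4-4 * A))/4" by (simp add: field_simps)
  have e2: "s4/4 * (B-A) = (s4 * (B-A))/4" by simp
  show ?thesis unfolding assms(1) assms(2) e1 e2 q4 ..
qed

lemma abs_lhs: fixes al be A B s4 p1 q1 a b c d e g :: complex
  assumes "al = A * (4 * B - s4)/(s4 * (B-A))" "be = B * (s4 - 4 * A)/(s4 * (B-A))"
    "s4 \<noteq> 0" "B - A \<noteq> 0" "q1 \<noteq> 0" "b \<noteq> 0" "d \<noteq> 0" "g \<noteq> 0"
  shows "al * (p1/q1) + be * (a/b * (c/d) * (e/g)) = (A * (4 * B - s4) * p1 * (b * d * g) + B * (s4 - 4 * A) * (a * c * e) * q1)/(s4 * (B-A) * q1 * (b * d * g))"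
proof -
  have 1: "a/b * (c/d) * (e/g) = (a * c * e)/(b * d * g)" by simp
  have "s4 * (B-A) \<noteq> 0" "b * d * g \<noteq> 0" using assms by auto
  then show ?thesis unfolding 1 assms(1,2) by (rule two_frac[OF _ assms(5)])
qed

lemma fr_eq: fixes a b c d :: complex shows "b \<noteq> 0 \<Longrightarrow> d \<noteq> 0 \<Longrightarrow> a * d = c * b \<Longrightarrow> a/b = c/d"
  by (simp add: frac_eq_eq)

lemma rhs_alg:
  fixes f a1 d1 d2 h k M u s A B al be :: complex
  assumes u: "u = (f-1)/2" and s: "s = (u-1) * (u+1)" and A: "A = a1 * (2 * u-a1)" and B: "B = d1 * (2 * u-d1)"
    and al: "al = A * (B-s)/(s * (B-A))" and be: "be = B * (s-A)/(s * (B-A))"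
    and hden: "(f/2 + 1/2) * (f/2 - 3/2) - a1 * (2 * f - 2 - d1 - d2 - a1 + M) \<noteq> 0"
    and h_def: "h = (f/2 + 1/2) * (f - 1 - d1 - d2 + M) * (3/2 - f/2) /
                  ((f/2 + 1/2) * (f/2 - 3/2) - a1 * (2 * f - 2 - d1 - d2 - a1 + M))"
    and kden: "d1 * d2 - h * (1 + d1 + d2 + a1 - f) \<noteq> 0"
    and k_def: "k = h * (1 + d1 + a1 - f) * (1 + d2 + a1 - f) / (d1 * d2 - h * (1 + d1 + d2 + a1 - f))"
    and k0: "k \<noteq> 0"
    and nz: "u-1 \<noteq> 0" "u+1 \<noteq> 0" "B-A \<noteq> 0" "f-a1-1 \<noteq> 0" "f-a1-d2-1 \<noteq> 0" "f-d1-d2-1+M \<noteq> 0" "f-d1-1 \<noteq> 0"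
  shows "al * ((f-a1-1+M)/(f-a1-1)) + be * ((f-a1-d2-1+M)/(f-a1-d2-1) * ((f-d1-d2-1)/(f-d1-d2-1+M)) * ((f-d1-1+M)/(f-d1-1)))
     = (k+M)/k"
proof -
  define H4n where "H4n = (f+1) * (f-1-d1-d2+M) * (3-f)"
  define H4d where "H4d = (f+1) * (f-3) - 4 * a1 * (2 * f-2-d1-d2-a1+M)"
  define X where "X = (1+d1+a1-f) * (1+d2+a1-f)"
  define Y where "Y = 1+d1+d2+a1-f"
  define s4 where "s4 = (f-3) * (f+1)"
  define A' where "A' = a1 * (f-1-a1)"
  define B' where "B' = d1 * (f-1-d1)"
  have AA: "A = A'" unfolding A A'_def u by (simp add: field_simps)
  have BB: "B = B'" unfolding B B'_def u by (simp add: field_simps)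
  have ss: "s = s4/4" unfolding s s4_def u by (simp add: field_simps) algebra?
  have hh: "h = H4n/H4d"
  proof -
    have 1: "(f/2 + 1/2) * (f - 1 - d1 - d2 + M) * (3/2 - f/2) = H4n/4" unfolding H4n_def by (simp add: field_simps) algebra?
    have 2: "(f/2 + 1/2) * (f/2 - 3/2) - a1 * (2 * f - 2 - d1 - d2 - a1 + M) = H4d/4" unfolding H4d_def by (simp add: field_simps) algebra?
    show ?thesis unfolding h_def 1 2 by simp
  qed
  have H4d0: "H4d \<noteq> 0"
  proof -
    have "(f/2 + 1/2) * (f/2 - 3/2) - a1 * (2 * f - 2 - d1 - d2 - a1 + M) = H4d/4" unfolding H4d_def by (simp add: field_simps) algebra?
    then show ?thesis using hden by auto
  qed
  have kk: "k = H4n * X/(d1 * d2 * H4d - H4n * Y)"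
    using abs_k[OF hh H4d0 k_def kden] unfolding X_def Y_def by simp
  have kM: "(k+M)/k = (H4n * X + M * (d1 * d2 * H4d - H4n * Y))/(H4n * X)"
    by (rule abs_kM[OF kk k0])
  have nX: "H4n * X \<noteq> 0" using kk k0 by auto
  have s40: "s4 \<noteq> 0" using nz(1,2) ss s by auto
  have BA': "B' - A' \<noteq> 0" using nz(3) AA BB by simp
  have q2: "(f-a1-d2-1) * (f-d1-d2-1+M) * (f-d1-1) \<noteq> 0" using nz by simp
  have lhs: "al * ((f-a1-1+M)/(f-a1-1)) + be * ((f-a1-d2-1+M)/(f-a1-d2-1) * ((f-d1-d2-1)/(f-d1-d2-1+M)) * ((f-d1-1+M)/(f-d1-1)))
    = (A' * (4 * B' - s4) * (f-a1-1+M) * ((f-a1-d2-1) * (f-d1-d2-1+M) * (f-d1-1)) + B' * (s4 - 4 * A') * ((f-a1-d2-1+M) * (f-d1-d2-1) * (f-d1-1+M)) * (f-a1-1))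
      /(s4 * (B'-A') * (f-a1-1) * ((f-a1-d2-1) * (f-d1-d2-1+M) * (f-d1-1)))"
    by (rule abs_lhs[OF abs_al[OF al[unfolded AA BB] ss] abs_be[OF be[unfolded AA BB] ss] s40 BA' nz(4,5,6,7)])
  have poly: "(A' * (4 * B' - s4) * (f-a1-1+M) * ((f-a1-d2-1) * (f-d1-d2-1+M) * (f-d1-1)) + B' * (s4 - 4 * A') * ((f-a1-d2-1+M) * (f-d1-d2-1) * (f-d1-1+M)) * (f-a1-1))
      * (H4n * X) = (H4n * X + M * (d1 * d2 * H4d - H4n * Y)) * (s4 * (B'-A') * (f-a1-1) * ((f-a1-d2-1) * (f-d1-d2-1+M) * (f-d1-1)))"
    unfolding A'_def B'_def s4_def H4n_def H4d_def X_def Y_def by algebra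
  have D1: "s4 * (B'-A') * (f-a1-1) * ((f-a1-d2-1) * (f-d1-d2-1+M) * (f-d1-1)) \<noteq> 0" using s40 BA' nz(4) q2 by simp
  show ?thesis unfolding lhs kM by (rule fr_eq[OF D1 nX poly])
qed

lemma dOm1_abs: fixes pf p2 p3 p4 q r1 r2 r3 Q c M :: complex
  assumes "q = Q * c/(c+M)" "Q \<noteq> 0" "c \<noteq> 0" "c+M \<noteq> 0" "r1 \<noteq> 0" "r2 \<noteq> 0" "r3 \<noteq> 0"
  shows "pf * p2 * p3 * p4 / (q * r1 * r2 * r3) = pf * p4 * p2 * p3 / (r1 * r2 * Q * r3) * ((c+M)/c)"
  unfolding assms(1) using assms(2-) by (simp add: divide_simps)

lemma dOm2_abs: fixes pf p2 P3 P4 pa Pd pd2 pall Q3 Q4 D c3 c4 cd M :: complex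
  assumes "P3 = Q3 * (c3+M)/c3" "P4 = Q4 * c4/(c4+M)" "Pd = D * cd/(cd+M)"
    "c3 \<noteq> 0" "c4 \<noteq> 0" "cd \<noteq> 0" "c3+M \<noteq> 0" "c4+M \<noteq> 0" "cd+M \<noteq> 0" "pa \<noteq> 0" "D \<noteq> 0" "pd2 \<noteq> 0" "pall \<noteq> 0"
  shows "pf * p2 * P3 * P4 / (pa * Pd * pd2 * pall) = pf * Q4 * p2 * Q3 / (D * pd2 * pa * pall) * ((c3+M)/c3 * (c4/(c4+M)) * ((cd+M)/cd))"
  unfolding assms(1-3) using assms(4-) by (simp add: divide_simps)

lemma psh_inv: fixes x :: complex assumes "x \<noteq> 0" "y = x + 1"
  shows "pochhammer y n = pochhammer x n * (x + of_nat n) / x"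
  using psh_up[OF assms(1)] assms(2) by simp

lemma psh_down': fixes x :: complex assumes "x + of_nat n \<noteq> 0" "y = x + 1"
  shows "pochhammer x n = pochhammer y n * x / (x + of_nat n)"
  using psh_down[OF assms(1)] assms(2) by simp

lemma dOm1_eq:
  fixes f a1 d1 d2 :: complex and N :: nat
  assumes nz: "f-a1-1 \<noteq> 0" "f-a1-1+ of_nat N \<noteq> 0" "pochhammer (f-a1) N \<noteq> 0" "pochhammer (f-d1) N \<noteq> 0"
     "pochhammer (f-d2) N \<noteq> 0" "pochhammer (f - a1 - d1 - d2 - 1) N \<noteq> 0"
  shows "dOm (f-1) (a1+1) d1 d2 N = pochhammer f N * pochhammer (f - d1 - d2) N * pochhammer (f - a1 - d1 - 1) N
           * pochhammer (f - a1 - d2 - 1) N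
         / (pochhammer (f - d1) N * pochhammer (f - d2) N * pochhammer (f - a1) N
           * pochhammer (f - a1 - d1 - d2 - 1) N) * ((f-a1-1+ of_nat N)/(f-a1-1))"
proof -
  have P: "pochhammer (1+(f-1)) N = pochhammer f N"
    "pochhammer (1+(f-1)-(a1+1)-d1) N = pochhammer (f - a1 - d1 - 1) N"
    "pochhammer (1+(f-1)-(a1+1)-d2) N = pochhammer (f - a1 - d2 - 1) N"
    "pochhammer (1+(f-1)-d1-d2) N = pochhammer (f - d1 - d2) N"
    "pochhammer (1+(f-1)-(a1+1)) N = pochhammer (f - a1 - 1) N"
    "pochhammer (1+(f-1)-d1) N = pochhammer (f - d1) N"
    "pochhammer (1+(f-1)-d2) N = pochhammer (f - d2) N"
    "pochhammer (1+(f-1)-(a1+1)-d1-d2) N = pochhammer (f - a1 - d1 - d2 - 1) N"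
    by (simp_all add: algebra_simps)
  have R: "pochhammer (f-a1-1) N = pochhammer (f-a1) N * (f-a1-1) / (f-a1-1+ of_nat N)"
    by (rule psh_down'[OF nz(2)]) simp
  show ?thesis unfolding dOm_def P
    by (rule dOm1_abs[OF R]) (use nz in auto)
qed

lemma dOm2_eq:
  fixes f a1 d1 d2 :: complex and N :: nat
  assumes nz: "f-a1-d2-1 \<noteq> 0" "f-a1-d2-1+ of_nat N \<noteq> 0" "f-d1-d2-1 + of_nat N \<noteq> 0" "f-d1-1 \<noteq> 0" "f-d1-1+ of_nat N \<noteq> 0"
     "f-d1-d2-1 \<noteq> 0"
     "pochhammer (f-a1) N \<noteq> 0" "pochhammer (f-d1) N \<noteq> 0"
     "pochhammer (f-d2) N \<noteq> 0" "pochhammer (f - a1 - d1 - d2 - 1) N \<noteq> 0"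
  shows "dOm (f-1) a1 (d1+1) d2 N = pochhammer f N * pochhammer (f - d1 - d2) N * pochhammer (f - a1 - d1 - 1) N
           * pochhammer (f - a1 - d2 - 1) N
         / (pochhammer (f - d1) N * pochhammer (f - d2) N * pochhammer (f - a1) N
           * pochhammer (f - a1 - d1 - d2 - 1) N) *
       ((f-a1-d2-1+ of_nat N)/(f-a1-d2-1) * ((f-d1-d2-1)/(f-d1-d2-1+ of_nat N)) * ((f-d1-1+ of_nat N)/(f-d1-1)))"
proof -
  have P: "pochhammer (1+(f-1)) N = pochhammer f N"
    "pochhammer (1+(f-1)-a1-(d1+1)) N = pochhammer (f - a1 - d1 - 1) N"
    "pochhammer (1+(f-1)-a1-d2) N = pochhammer (f - a1 - d2) N"
    "pochhammer (1+(f-1)-(d1+1)-d2) N = pochhammer (f - d1 - d2 - 1) N"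
    "pochhammer (1+(f-1)-a1) N = pochhammer (f - a1) N"
    "pochhammer (1+(f-1)-(d1+1)) N = pochhammer (f - d1 - 1) N"
    "pochhammer (1+(f-1)-d2) N = pochhammer (f - d2) N"
    "pochhammer (1+(f-1)-a1-(d1+1)-d2) N = pochhammer (f - a1 - d1 - d2 - 1) N"
    by (simp_all add: algebra_simps)
  have R3: "pochhammer (f-a1-d2) N = pochhammer (f-a1-d2-1) N * (f-a1-d2-1+ of_nat N)/(f-a1-d2-1)"
    by (rule psh_inv[OF nz(1)]) simp
  have R4: "pochhammer (f-d1-d2-1) N = pochhammer (f-d1-d2) N * (f-d1-d2-1)/(f-d1-d2-1+ of_nat N)"
    by (rule psh_down'[OF nz(3)]) simp
  have Rd: "pochhammer (f-d1-1) N = pochhammer (f-d1) N * (f-d1-1)/(f-d1-1+ of_nat N)"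
    by (rule psh_down'[OF nz(5)]) simp
  show ?thesis unfolding dOm_def P
    by (rule dOm2_abs[OF R3 R4 Rd]) (use nz in auto)
qed

definition mgen :: "complex \<Rightarrow> complex \<Rightarrow> complex \<Rightarrow> complex \<Rightarrow> bool" where
  "mgen f a1 d1 d2 \<longleftrightarrow> f \<notin> \<int> \<and> (f-1)/2 \<notin> \<int> \<and> f-a1 \<notin> \<int> \<and> f-d1 \<notin> \<int> \<and> f-d2 \<notin> \<int> \<and> a1+d1+d2-f \<notin> \<int>
     \<and> f-a1-d1-d2 \<notin> \<int> \<and> 2 * f-a1-d1-d2 \<notin> \<int> \<and> a1 \<notin> \<int> \<and> d1 \<notin> \<int> \<and> d2 \<notin> \<int> \<and> d1-a1 \<notin> \<int>
     \<and> f-d1-a1 \<notin> \<int> \<and> f-a1-d2 \<notin> \<int> \<and> f-d1-d2 \<notin> \<int>"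

lemma main_generic:
  fixes N :: nat and f a1 d1 d2 h k :: complex
  assumes gen: "mgen f a1 d1 d2"
    and hden: "(f/2 + 1/2) * (f/2 - 3/2) - a1 * (2 * f - 2 - d1 - d2 - a1 + of_nat N) \<noteq> 0"
    and h_def: "h = (f/2 + 1/2) * (f - 1 - d1 - d2 + of_nat N) * (3/2 - f/2) /
                  ((f/2 + 1/2) * (f/2 - 3/2) - a1 * (2 * f - 2 - d1 - d2 - a1 + of_nat N))"
    and kden: "d1 * d2 - h * (1 + d1 + d2 + a1 - f) \<noteq> 0"
    and k_def: "k = h * (1 + d1 + a1 - f) * (1 + d2 + a1 - f) / (d1 * d2 - h * (1 + d1 + d2 + a1 - f))"
    and k0: "k \<noteq> 0" and pk: "pochhammer k N \<noteq> 0"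
  shows "(\<Sum>n<Suc N. hterm [f - 1, f/2 + 3/2, a1, d1, d2, 2 * f - 2 - d1 - d2 - a1 + of_nat N, - of_nat N]
                   [f/2 - 3/2, f - a1, f - d1, f - d2, 2 + a1 + d1 + d2 - f - of_nat N, f + of_nat N] n)
       = pochhammer f N * pochhammer (f - d1 - d2) N * pochhammer (f - a1 - d1 - 1) N
           * pochhammer (f - a1 - d2 - 1) N
         / (pochhammer (f - d1) N * pochhammer (f - d2) N * pochhammer (f - a1) N
           * pochhammer (f - a1 - d1 - d2 - 1) N)
         * (pochhammer (k + 1) N / pochhammer k N)"
proof -
  note G = gen[unfolded mgen_def]
  define M :: complex where "M = of_nat N"
  define u where "u = (f-1)/2"
  define s where "s = (u-1) * (u+1)"
  define A where "A = a1 * (2 * u-a1)"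
  define B where "B = d1 * (2 * u-d1)"
  define al where "al = A * (B-s)/(s * (B-A))"
  define be where "be = B * (s-A)/(s * (B-A))"
  have u2: "2 * u = f-1" by (simp add: u_def)
  have nu_1: "u \<noteq> 0"
    by (rule notint_nz[of "(f-1)/2"]) (use G in \<open>simp_all add: u_def\<close>)
  have nu_2: "u+1 \<noteq> 0"
    by (rule notint_nz[of "(f-1)/2"]) (use G in \<open>simp_all add: u_def\<close>)
  have nu_3: "u-1 \<noteq> 0"
    by (rule notint_nz[of "(f-1)/2"]) (use G in \<open>simp_all add: u_def\<close>)
  note nu = nu_1 nu_2 nu_3
  have na1: "a1 \<noteq> 0" by (rule notint_nz[of a1]) (use G in simp_all)
  have nd1: "d1 \<noteq> 0" by (rule notint_nz[of d1]) (use G in simp_all)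
  have nua: "2 * u-a1 \<noteq> 0" by (rule notint_nz[of "f-a1"]) (use G in \<open>simp_all add: u2\<close>)
  have nud: "2 * u-d1 \<noteq> 0" by (rule notint_nz[of "f-d1"]) (use G in \<open>simp_all add: u2\<close>)
  have BA: "B-A \<noteq> 0"
  proof -
    have "B - A = (d1-a1) * (2 * u-d1-a1)" unfolding A_def B_def by (simp add: algebra_simps)
    moreover have "d1-a1 \<noteq> 0" by (rule notint_nz[of "d1-a1"]) (use G in simp_all)
    moreover have "2 * u-d1-a1 \<noteq> 0" by (rule notint_nz[of "f-d1-a1"]) (use G in \<open>simp_all add: u2\<close>)
    ultimately show ?thesis by simp
  qed
  have pz: "pochhammer (f-a1) n \<noteq> 0" "pochhammer (f-d1) n \<noteq> 0" "pochhammer (f-d2) n \<noteq> 0"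
      "pochhammer (2 + a1 + d1 + d2 - f - of_nat N) n \<noteq> 0" "pochhammer (f + of_nat N) n \<noteq> 0"
      "pochhammer u n \<noteq> 0" for n
  proof -
    show "pochhammer (f-a1) n \<noteq> 0" by (rule notint_poch[of "f-a1"]) (use G in simp_all)
    show "pochhammer (f-d1) n \<noteq> 0" by (rule notint_poch[of "f-d1"]) (use G in simp_all)
    show "pochhammer (f-d2) n \<noteq> 0" by (rule notint_poch[of "f-d2"]) (use G in simp_all)
    show "pochhammer (2 + a1 + d1 + d2 - f - of_nat N) n \<noteq> 0" by (rule notint_poch[of "a1+d1+d2-f"]) (use G in simp_all)
    show "pochhammer (f + of_nat N) n \<noteq> 0" by (rule notint_poch[of "f"]) (use G in simp_all)
    show "pochhammer u n \<noteq> 0" by (rule notint_poch[of "(f-1)/2"]) (use G in \<open>simp_all add: u_def\<close>)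
  qed
  have nzn: "u-1+ of_nat n \<noteq> 0" "2 * u-a1+ of_nat n \<noteq> 0" "2 * u-d1+ of_nat n \<noteq> 0" for n
  proof -
    show "u-1+ of_nat n \<noteq> 0" by (rule notint_nz[of "(f-1)/2"]) (use G in \<open>simp_all add: u_def\<close>)
    show "2 * u-a1+ of_nat n \<noteq> 0" by (rule notint_nz[of "f-a1"]) (use G in \<open>simp_all add: u2\<close>)
    show "2 * u-d1+ of_nat n \<noteq> 0" by (rule notint_nz[of "f-d1"]) (use G in \<open>simp_all add: u2\<close>)
  qed
  have decomp: "hterm [f - 1, f/2 + 3/2, a1, d1, d2, 2 * f - 2 - d1 - d2 - a1 + of_nat N, - of_nat N]
                   [f/2 - 3/2, f - a1, f - d1, f - d2, 2 + a1 + d1 + d2 - f - of_nat N, f + of_nat N] n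
      = al * dT (f-1) (a1+1) d1 d2 (of_nat N) n + be * dT (f-1) a1 (d1+1) d2 (of_nat N) n" for n
    by (rule term_decomp[OF u_def s_def A_def B_def al_def be_def nu na1 nd1 nua nud BA nzn(1)[of n] nzn(2)[of n] nzn(3)[of n] pz(6)[of n] pz(1)[of n] pz(2)[of n] pz(3)[of n] pz(4)[of n] pz(5)[of n]])
  have dg1: "dgen (f-1) (a1+1) d1 d2" unfolding dgen_def
  proof (intro conjI)
    show "f-1 \<notin> \<int>" by (rule notint_shift[of f]) (use G in simp_all)
    show "(f-1)/2 \<notin> \<int>" using G by simp
    show "f-1-(a1+1) \<notin> \<int>" by (rule notint_shift[of "f-a1"]) (use G in simp_all)
    show "f-1-d1 \<notin> \<int>" by (rule notint_shift[of "f-d1"]) (use G in simp_all)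
    show "f-1-d2 \<notin> \<int>" by (rule notint_shift[of "f-d2"]) (use G in simp_all)
    show "a1+1+d1+d2-(f-1) \<notin> \<int>" by (rule notint_shift[of "a1+d1+d2-f"]) (use G in simp_all)
    show "f-1-(a1+1)-d1-d2 \<notin> \<int>" by (rule notint_shift[of "f-a1-d1-d2"]) (use G in simp_all)
    show "2 * (f-1)-(a1+1)-d1-d2 \<notin> \<int>" by (rule notint_shift[of "2 * f-a1-d1-d2"]) (use G in simp_all)
    show "a1+1 \<notin> \<int>" by (rule notint_shift[of "a1"]) (use G in simp_all)
    show "d1 \<notin> \<int>" "d2 \<notin> \<int>" using G by simp_all
  qed
  have dg2: "dgen (f-1) a1 (d1+1) d2" unfolding dgen_def
  proof (intro conjI)
    show "f-1 \<notin> \<int>" by (rule notint_shift[of f]) (use G in simp_all)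
    show "(f-1)/2 \<notin> \<int>" using G by simp
    show "f-1-a1 \<notin> \<int>" by (rule notint_shift[of "f-a1"]) (use G in simp_all)
    show "f-1-(d1+1) \<notin> \<int>" by (rule notint_shift[of "f-d1"]) (use G in simp_all)
    show "f-1-d2 \<notin> \<int>" by (rule notint_shift[of "f-d2"]) (use G in simp_all)
    show "a1+(d1+1)+d2-(f-1) \<notin> \<int>" by (rule notint_shift[of "a1+d1+d2-f"]) (use G in simp_all)
    show "f-1-a1-(d1+1)-d2 \<notin> \<int>" by (rule notint_shift[of "f-a1-d1-d2"]) (use G in simp_all)
    show "2 * (f-1)-a1-(d1+1)-d2 \<notin> \<int>" by (rule notint_shift[of "2 * f-a1-d1-d2"]) (use G in simp_all)
    show "d1+1 \<notin> \<int>" by (rule notint_shift[of "d1"]) (use G in simp_all)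
    show "a1 \<notin> \<int>" "d2 \<notin> \<int>" using G by simp_all
  qed
  have o1_1: "f-a1-1 \<noteq> 0"
    by (rule notint_nz[of "f-a1"]) (use G in simp_all)
  have o1_2: "f-a1-1+ of_nat N \<noteq> 0"
    by (rule notint_nz[of "f-a1"]) (use G in simp_all)
  note o1 = o1_1 o1_2
  have o2_1: "f-a1-d2-1 \<noteq> 0"
    by (rule notint_nz[of "f-a1-d2"]) (use G in simp_all)
  have o2_2: "f-a1-d2-1+ of_nat N \<noteq> 0"
    by (rule notint_nz[of "f-a1-d2"]) (use G in simp_all)
  note o2 = o2_1 o2_2
  have o3_1: "f-d1-d2-1+ of_nat N \<noteq> 0"
    by (rule notint_nz[of "f-d1-d2"]) (use G in simp_all)
  have o3_2: "f-d1-d2-1 \<noteq> 0"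
    by (rule notint_nz[of "f-d1-d2"]) (use G in simp_all)
  note o3 = o3_1 o3_2
  have o4_1: "f-d1-1 \<noteq> 0"
    by (rule notint_nz[of "f-d1"]) (use G in simp_all)
  have o4_2: "f-d1-1+ of_nat N \<noteq> 0"
    by (rule notint_nz[of "f-d1"]) (use G in simp_all)
  note o4 = o4_1 o4_2
  have o5: "pochhammer (f - a1 - d1 - d2 - 1) N \<noteq> 0" by (rule notint_poch[of "f-a1-d1-d2"]) (use G in simp_all)
  note Om1 = dOm1_eq[OF o1 pz(1) pz(2) pz(3) o5]
  note Om2 = dOm2_eq[OF o2 o3(1) o4 o3(2) pz(1) pz(2) pz(3) o5]
  have "(\<Sum>n<Suc N. hterm [f - 1, f/2 + 3/2, a1, d1, d2, 2 * f - 2 - d1 - d2 - a1 + of_nat N, - of_nat N]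
                   [f/2 - 3/2, f - a1, f - d1, f - d2, 2 + a1 + d1 + d2 - f - of_nat N, f + of_nat N] n)
     = al * (\<Sum>n<Suc N. dT (f-1) (a1+1) d1 d2 (of_nat N) n) + be * (\<Sum>n<Suc N. dT (f-1) a1 (d1+1) d2 (of_nat N) n)"
    unfolding decomp by (simp only: sum.distrib sum_distrib_left)
  also have "\<dots> = al * dOm (f-1) (a1+1) d1 d2 N + be * dOm (f-1) a1 (d1+1) d2 N"
    unfolding dougall[OF dg1] dougall[OF dg2] ..
  also note Om1 also note Om2
  finally have S: "(\<Sum>n<Suc N. hterm [f - 1, f/2 + 3/2, a1, d1, d2, 2 * f - 2 - d1 - d2 - a1 + of_nat N, - of_nat N]
                   [f/2 - 3/2, f - a1, f - d1, f - d2, 2 + a1 + d1 + d2 - f - of_nat N, f + of_nat N] n)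
     = PP * (al * ((f-a1-1+ of_nat N)/(f-a1-1)) + be * ((f-a1-d2-1+ of_nat N)/(f-a1-d2-1) * ((f-d1-d2-1)/(f-d1-d2-1+ of_nat N)) * ((f-d1-1+ of_nat N)/(f-d1-1))))"
    if "PP = pochhammer f N * pochhammer (f - d1 - d2) N * pochhammer (f - a1 - d1 - 1) N
           * pochhammer (f - a1 - d2 - 1) N
         / (pochhammer (f - d1) N * pochhammer (f - d2) N * pochhammer (f - a1) N
           * pochhammer (f - a1 - d1 - d2 - 1) N)" for PP
    unfolding that by (simp add: algebra_simps)
  have alg: "al * ((f-a1-1+ of_nat N)/(f-a1-1)) + be * ((f-a1-d2-1+ of_nat N)/(f-a1-d2-1) * ((f-d1-d2-1)/(f-d1-d2-1+ of_nat N)) * ((f-d1-1+ of_nat N)/(f-d1-1)))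
     = (k + of_nat N)/k"
    by (rule rhs_alg[OF u_def s_def A_def B_def al_def be_def hden h_def kden k_def k0 nu(3) nu(2) BA o1(1) o2(1) o3(1) o4(1)])
  have pk1: "pochhammer (k+1) N / pochhammer k N = (k + of_nat N)/k"
  proof -
    have "pochhammer (k+1) N = pochhammer k N * ((k + of_nat N)/k)" using psh_up[OF k0, of N] by simp
    then show ?thesis using pk by simp
  qed
  show ?thesis unfolding S[OF refl] alg pk1 ..
qed

lemma hypergeom_fin:
  assumes "- of_nat N \<in> set as"
  shows "hypergeom as bs 1 = (\<Sum>n<Suc N. hterm as bs n)"
proof -
  have "hypergeom as bs 1 = (\<Sum>n\<in>{..<Suc N}. (\<Prod>a\<leftarrow>as. pochhammer a n) / ((\<Prod>b\<leftarrow>bs. pochhammer b n) * fact n) * 1 ^ n)"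
    unfolding hypergeom_def
  proof (rule suminf_finite)
    fix n assume "n \<notin> {..<Suc N}"
    then have "pochhammer (- of_nat N) n = (0::complex)" by (auto simp: pochhammer_eq_0_iff)
    then have "(\<Prod>a\<leftarrow>as. pochhammer a n) = (0::complex)"
      using assms by (force simp: prod_list_zero_iff)
    then show "(\<Prod>a\<leftarrow>as. pochhammer a n) / ((\<Prod>b\<leftarrow>bs. pochhammer b n) * fact n) * 1 ^ n = 0" by simp
  qed simp
  then show ?thesis by (simp add: hterm_def)
qed

lemma countable_line:
  fixes c v :: complex and g :: "real \<Rightarrow> complex"
  assumes g: "\<And>t. g t = c + of_real t * v" and v: "v \<noteq> 0"
  shows "countable {t. g t \<in> \<int>}"
proof -
  have "{t. g t \<in> \<int>} \<subseteq> (\<lambda>z. Re ((z - c)/v)) ` \<int>"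
  proof
    fix t assume "t \<in> {t. g t \<in> \<int>}"
    then have "g t \<in> \<int>" by simp
    moreover have "Re ((g t - c)/v) = t" using v by (simp add: g)
    ultimately show "t \<in> (\<lambda>z. Re ((z - c)/v)) ` \<int>" by (metis image_eqI)
  qed
  moreover have "countable (\<int> :: complex set)" unfolding Ints_def by simp
  ultimately show ?thesis by (metis countable_image countable_subset)
qed

lemma abstract_perturb:
  fixes g :: "real \<Rightarrow> complex" and P :: "real \<Rightarrow> bool" and B :: "real set"
  assumes cont: "isCont g 0" and ev: "eventually P (at 0)" and B: "countable B"
    and gen: "\<And>t. P t \<Longrightarrow> t \<notin> B \<Longrightarrow> g t = 0"
  shows "g 0 = 0"
proof (rule ccontr)
  assume g0: "g 0 \<noteq> 0"
  have "(g \<longlongrightarrow> g 0) (at 0)" using cont by (simp add: isCont_def)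
  then have "eventually (\<lambda>t. g t \<noteq> 0) (at 0)" using g0 by (rule tendsto_imp_eventually_ne)
  with ev have "eventually (\<lambda>t. P t \<and> g t \<noteq> 0) (at 0)" by (rule eventually_conj)
  then obtain d :: real where d: "d > 0" "\<And>t. t \<noteq> 0 \<Longrightarrow> dist t 0 < d \<Longrightarrow> P t \<and> g t \<noteq> 0"
    unfolding eventually_at by auto
  have "{0<..<d} \<subseteq> B"
  proof
    fix t assume t: "t \<in> {0<..<d}"
    then have "P t \<and> g t \<noteq> 0" using d(2)[of t] by auto
    then show "t \<in> B" using gen by blast
  qed
  moreover have "uncountable {0<..<d}" using d(1) by (simp add: uncountable_open_interval)
  ultimately show False using B countable_subset by blast
qed

lemma isCont_pochhammer': "isCont (g::real \<Rightarrow> complex) x \<Longrightarrow> isCont (\<lambda>t. pochhammer (g t) n) x"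
  by (rule isCont_o2[where f=g and g="\<lambda>z. pochhammer z n", OF _ isCont_pochhammer])


lemma ev_ne: fixes g :: "real \<Rightarrow> complex" shows "isCont g 0 \<Longrightarrow> g 0 \<noteq> 0 \<Longrightarrow> eventually (\<lambda>t. g t \<noteq> 0) (at 0)"
  unfolding isCont_def by (rule tendsto_imp_eventually_ne)

lemma poch_nz: "(b::complex) \<notin> \<int>\<^sub>\<le>\<^sub>0 \<Longrightarrow> pochhammer b n \<noteq> 0"
  by (auto simp: pochhammer_eq_0_iff)

definition hdf :: "complex \<Rightarrow> complex \<Rightarrow> complex \<Rightarrow> complex \<Rightarrow> nat \<Rightarrow> complex" where
  "hdf f a1 d1 d2 N = (f/2 + 1/2) * (f/2 - 3/2) - a1 * (2*f - 2 - d1 - d2 - a1 + of_nat N)"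
definition hhf :: "complex \<Rightarrow> complex \<Rightarrow> complex \<Rightarrow> complex \<Rightarrow> nat \<Rightarrow> complex" where
  "hhf f a1 d1 d2 N = (f/2 + 1/2) * (f - 1 - d1 - d2 + of_nat N) * (3/2 - f/2) / hdf f a1 d1 d2 N"
definition kdf :: "complex \<Rightarrow> complex \<Rightarrow> complex \<Rightarrow> complex \<Rightarrow> nat \<Rightarrow> complex" where
  "kdf f a1 d1 d2 N = d1 * d2 - hhf f a1 d1 d2 N * (1 + d1 + d2 + a1 - f)"
definition kkf :: "complex \<Rightarrow> complex \<Rightarrow> complex \<Rightarrow> complex \<Rightarrow> nat \<Rightarrow> complex" where
  "kkf f a1 d1 d2 N = hhf f a1 d1 d2 N * (1 + d1 + a1 - f) * (1 + d2 + a1 - f) / kdf f a1 d1 d2 N"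
definition LH :: "complex \<Rightarrow> complex \<Rightarrow> complex \<Rightarrow> complex \<Rightarrow> nat \<Rightarrow> complex" where
  "LH f a1 d1 d2 N = (\<Sum>n<Suc N. hterm [f - 1, f/2 + 3/2, a1, d1, d2, 2*f - 2 - d1 - d2 - a1 + of_nat N, - of_nat N]
                   [f/2 - 3/2, f - a1, f - d1, f - d2, 2 + a1 + d1 + d2 - f - of_nat N, f + of_nat N] n)"
definition RH :: "complex \<Rightarrow> complex \<Rightarrow> complex \<Rightarrow> complex \<Rightarrow> nat \<Rightarrow> complex" where
  "RH f a1 d1 d2 N = pochhammer f N * pochhammer (f - d1 - d2) N * pochhammer (f - a1 - d1 - 1) N
           * pochhammer (f - a1 - d2 - 1) N
         / (pochhammer (f - d1) N * pochhammer (f - d2) N * pochhammer (f - a1) N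
           * pochhammer (f - a1 - d1 - d2 - 1) N)
         * (pochhammer (kkf f a1 d1 d2 N + 1) N / pochhammer (kkf f a1 d1 d2 N) N)"

lemma LH_RH_generic:
  assumes "mgen f a1 d1 d2" "hdf f a1 d1 d2 N \<noteq> 0" "kdf f a1 d1 d2 N \<noteq> 0" "kkf f a1 d1 d2 N \<noteq> 0"
    "pochhammer (kkf f a1 d1 d2 N) N \<noteq> 0"
  shows "LH f a1 d1 d2 N = RH f a1 d1 d2 N"
  unfolding LH_def RH_def
  by (rule main_generic[OF assms(1) assms(2)[unfolded hdf_def] hhf_def[unfolded hdf_def] assms(3)[unfolded kdf_def]
        kkf_def[unfolded kdf_def] assms(4) assms(5)])

lemma countable_bad:
  fixes f a1 d1 d2 :: complex
  shows "countable {t::real. \<not> mgen (f + of_real t) (a1 + 3 * of_real t) (d1 + 5 * of_real t) (d2 + 11 * of_real t)}"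
proof -
  let ?F = "\<lambda>t::real. f + of_real t" and ?A = "\<lambda>t::real. a1 + 3 * of_real t"
  let ?D1 = "\<lambda>t::real. d1 + 5 * of_real t" and ?D2 = "\<lambda>t::real. d2 + 11 * of_real t"
  have c1: "countable {t. ?F t \<in> \<int>}"
    by (rule countable_line[where c = "f" and v = "1"]) (simp_all add: algebra_simps)
  have c2: "countable {t. (?F t - 1)/2 \<in> \<int>}"
    by (rule countable_line[where c = "(f-1)/2" and v = "1/2"]) (simp_all add: field_simps)
  have c3: "countable {t. ?F t - ?A t \<in> \<int>}"
    by (rule countable_line[where c = "f-a1" and v = "-2"]) (simp_all add: algebra_simps)
  have c4: "countable {t. ?F t - ?D1 t \<in> \<int>}"
    by (rule countable_line[where c = "f-d1" and v = "-4"]) (simp_all add: algebra_simps)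
  have c5: "countable {t. ?F t - ?D2 t \<in> \<int>}"
    by (rule countable_line[where c = "f-d2" and v = "-10"]) (simp_all add: algebra_simps)
  have c6: "countable {t. ?A t + ?D1 t + ?D2 t - ?F t \<in> \<int>}"
    by (rule countable_line[where c = "a1+d1+d2-f" and v = "18"]) (simp_all add: algebra_simps)
  have c7: "countable {t. ?F t - ?A t - ?D1 t - ?D2 t \<in> \<int>}"
    by (rule countable_line[where c = "f-a1-d1-d2" and v = "-18"]) (simp_all add: algebra_simps)
  have c8: "countable {t. 2 * ?F t - ?A t - ?D1 t - ?D2 t \<in> \<int>}"
    by (rule countable_line[where c = "2*f-a1-d1-d2" and v = "-17"]) (simp_all add: algebra_simps)
  have c9: "countable {t. ?A t \<in> \<int>}"
    by (rule countable_line[where c = "a1" and v = "3"]) (simp_all add: algebra_simps)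
  have c10: "countable {t. ?D1 t \<in> \<int>}"
    by (rule countable_line[where c = "d1" and v = "5"]) (simp_all add: algebra_simps)
  have c11: "countable {t. ?D2 t \<in> \<int>}"
    by (rule countable_line[where c = "d2" and v = "11"]) (simp_all add: algebra_simps)
  have c12: "countable {t. ?D1 t - ?A t \<in> \<int>}"
    by (rule countable_line[where c = "d1-a1" and v = "2"]) (simp_all add: algebra_simps)
  have c13: "countable {t. ?F t - ?D1 t - ?A t \<in> \<int>}"
    by (rule countable_line[where c = "f-d1-a1" and v = "-7"]) (simp_all add: algebra_simps)
  have c14: "countable {t. ?F t - ?A t - ?D2 t \<in> \<int>}"
    by (rule countable_line[where c = "f-a1-d2" and v = "-13"]) (simp_all add: algebra_simps)
  have c15: "countable {t. ?F t - ?D1 t - ?D2 t \<in> \<int>}"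
    by (rule countable_line[where c = "f-d1-d2" and v = "-15"]) (simp_all add: algebra_simps)
  note c = c1 c2 c3 c4 c5 c6 c7 c8 c9 c10 c11 c12 c13 c14 c15
  have "{t::real. \<not> mgen (?F t) (?A t) (?D1 t) (?D2 t)} \<subseteq>
     {t. ?F t \<in> \<int>} \<union> {t. (?F t - 1)/2 \<in> \<int>} \<union> {t. ?F t - ?A t \<in> \<int>} \<union> {t. ?F t - ?D1 t \<in> \<int>}
     \<union> {t. ?F t - ?D2 t \<in> \<int>} \<union> {t. ?A t + ?D1 t + ?D2 t - ?F t \<in> \<int>} \<union> {t. ?F t - ?A t - ?D1 t - ?D2 t \<in> \<int>}
     \<union> {t. 2 * ?F t - ?A t - ?D1 t - ?D2 t \<in> \<int>} \<union> {t. ?A t \<in> \<int>} \<union> {t. ?D1 t \<in> \<int>} \<union> {t. ?D2 t \<in> \<int>}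
     \<union> {t. ?D1 t - ?A t \<in> \<int>} \<union> {t. ?F t - ?D1 t - ?A t \<in> \<int>} \<union> {t. ?F t - ?A t - ?D2 t \<in> \<int>}
     \<union> {t. ?F t - ?D1 t - ?D2 t \<in> \<int>}"
    unfolding mgen_def by blast
  moreover have "countable (
     {t. ?F t \<in> \<int>} \<union> {t. (?F t - 1)/2 \<in> \<int>} \<union> {t. ?F t - ?A t \<in> \<int>} \<union> {t. ?F t - ?D1 t \<in> \<int>}
     \<union> {t. ?F t - ?D2 t \<in> \<int>} \<union> {t. ?A t + ?D1 t + ?D2 t - ?F t \<in> \<int>} \<union> {t. ?F t - ?A t - ?D1 t - ?D2 t \<in> \<int>}
     \<union> {t. 2 * ?F t - ?A t - ?D1 t - ?D2 t \<in> \<int>} \<union> {t. ?A t \<in> \<int>} \<union> {t. ?D1 t \<in> \<int>} \<union> {t. ?D2 t \<in> \<int>}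
     \<union> {t. ?D1 t - ?A t \<in> \<int>} \<union> {t. ?F t - ?D1 t - ?A t \<in> \<int>} \<union> {t. ?F t - ?A t - ?D2 t \<in> \<int>}
     \<union> {t. ?F t - ?D1 t - ?D2 t \<in> \<int>})"
    using c by (simp only: countable_Un_iff)
  ultimately show ?thesis by (rule countable_subset)
qed

theorem mainTheorem11:
  fixes N :: nat and f a1 d1 d2 h k :: complex
  assumes lower: "\<forall>b \<in> set [f/2 - 3/2, f - a1, f - d1, f - d2, 2 + a1 + d1 + d2 - f - of_nat N, f + of_nat N].
                    b \<notin> \<int>\<^sub>\<le>\<^sub>0"
    and hden: "(f/2 + 1/2) * (f/2 - 3/2) - a1 * (2*f - 2 - d1 - d2 - a1 + of_nat N) \<noteq> 0"
    and h_def: "h = (f/2 + 1/2) * (f - 1 - d1 - d2 + of_nat N) * (3/2 - f/2) /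
                  ((f/2 + 1/2) * (f/2 - 3/2) - a1 * (2*f - 2 - d1 - d2 - a1 + of_nat N))"
    and kden: "d1 * d2 - h * (1 + d1 + d2 + a1 - f) \<noteq> 0"
    and k_def: "k = h * (1 + d1 + a1 - f) * (1 + d2 + a1 - f) / (d1 * d2 - h * (1 + d1 + d2 + a1 - f))"
    and rhsden: "pochhammer (f - d1) N * pochhammer (f - d2) N * pochhammer (f - a1) N
                   * pochhammer (f - a1 - d1 - d2 - 1) N * pochhammer k N \<noteq> 0"
  shows "hypergeom [f - 1, f/2 + 3/2, a1, d1, d2, 2*f - 2 - d1 - d2 - a1 + of_nat N, - of_nat N]
                   [f/2 - 3/2, f - a1, f - d1, f - d2, 2 + a1 + d1 + d2 - f - of_nat N, f + of_nat N] 1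
       = pochhammer f N * pochhammer (f - d1 - d2) N * pochhammer (f - a1 - d1 - 1) N
           * pochhammer (f - a1 - d2 - 1) N
         / (pochhammer (f - d1) N * pochhammer (f - d2) N * pochhammer (f - a1) N
           * pochhammer (f - a1 - d1 - d2 - 1) N)
         * (pochhammer (k + 1) N / pochhammer k N)"
proof -
  have HF: "hypergeom [f - 1, f/2 + 3/2, a1, d1, d2, 2*f - 2 - d1 - d2 - a1 + of_nat N, - of_nat N]
                   [f/2 - 3/2, f - a1, f - d1, f - d2, 2 + a1 + d1 + d2 - f - of_nat N, f + of_nat N] 1
      = LH f a1 d1 d2 N"
    unfolding LH_def by (rule hypergeom_fin) simp
  have hh: "hhf f a1 d1 d2 N = h" unfolding hhf_def hdf_def h_def ..
  have kk: "kkf f a1 d1 d2 N = k" unfolding kkf_def kdf_def hh k_def ..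
  have RHe: "RH f a1 d1 d2 N = pochhammer f N * pochhammer (f - d1 - d2) N * pochhammer (f - a1 - d1 - 1) N
           * pochhammer (f - a1 - d2 - 1) N
         / (pochhammer (f - d1) N * pochhammer (f - d2) N * pochhammer (f - a1) N
           * pochhammer (f - a1 - d1 - d2 - 1) N)
         * (pochhammer (k + 1) N / pochhammer k N)" unfolding RH_def kk ..
  show ?thesis
  proof (cases "N = 0")
    case True
    show ?thesis unfolding HF RHe[symmetric] by (simp add: True LH_def RH_def hterm_def)
  next
    case False
    have pk: "pochhammer k N \<noteq> 0" using rhsden by simp
    have k0: "k \<noteq> 0"
    proof
      assume "k = 0"
      then have "pochhammer k N = 0" using False by (auto simp: pochhammer_eq_0_iff)
      with pk show False by simp
    qed
    have lp: "pochhammer (f/2 - 3/2) n \<noteq> 0" "pochhammer (f - a1) n \<noteq> 0" "pochhammer (f - d1) n \<noteq> 0"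
      "pochhammer (f - d2) n \<noteq> 0" "pochhammer (2 + a1 + d1 + d2 - f - of_nat N) n \<noteq> 0"
      "pochhammer (f + of_nat N) n \<noteq> 0" for n
      using lower by (auto intro!: poch_nz)
    have rp: "pochhammer (f - d1) N * pochhammer (f - d2) N * pochhammer (f - a1) N
                   * pochhammer (f - a1 - d1 - d2 - 1) N \<noteq> 0" using rhsden by simp
    define Ft where "Ft = (\<lambda>t::real. f + of_real t)"
    define At where "At = (\<lambda>t::real. a1 + 3 * of_real t)"
    define Dt1 where "Dt1 = (\<lambda>t::real. d1 + 5 * of_real t)"
    define Dt2 where "Dt2 = (\<lambda>t::real. d2 + 11 * of_real t)"
    have cF: "isCont Ft 0" "isCont At 0" "isCont Dt1 0" "isCont Dt2 0"
      unfolding Ft_def At_def Dt1_def Dt2_def by (auto intro!: continuous_intros)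
    have v0: "Ft 0 = f" "At 0 = a1" "Dt1 0 = d1" "Dt2 0 = d2"
      unfolding Ft_def At_def Dt1_def Dt2_def by simp_all
    have c_hd: "isCont (\<lambda>t. hdf (Ft t) (At t) (Dt1 t) (Dt2 t) N) 0"
      unfolding hdf_def by (intro continuous_intros cF) simp_all
    have c_hh: "isCont (\<lambda>t. hhf (Ft t) (At t) (Dt1 t) (Dt2 t) N) 0"
      unfolding hhf_def by (intro continuous_intros cF c_hd) (use hden in \<open>simp_all add: v0 hdf_def\<close>)
    have c_kd: "isCont (\<lambda>t. kdf (Ft t) (At t) (Dt1 t) (Dt2 t) N) 0"
      unfolding kdf_def by (intro continuous_intros cF c_hh)
    have kd0: "kdf (Ft 0) (At 0) (Dt1 0) (Dt2 0) N \<noteq> 0"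
      unfolding v0 kdf_def hh by (rule kden)
    have c_kk: "isCont (\<lambda>t. kkf (Ft t) (At t) (Dt1 t) (Dt2 t) N) 0"
      unfolding kkf_def by (intro continuous_intros cF c_hh c_kd) (use kd0 in simp_all)
    have c_pk: "isCont (\<lambda>t. pochhammer (kkf (Ft t) (At t) (Dt1 t) (Dt2 t) N) N) 0"
      by (intro isCont_pochhammer' c_kk)
    have c_RH: "isCont (\<lambda>t. RH (Ft t) (At t) (Dt1 t) (Dt2 t) N) 0"
      unfolding RH_def
      by (intro continuous_intros isCont_pochhammer' cF c_kk) (use rp pk in \<open>simp_all add: v0 kk\<close>)
    have c_LH: "isCont (\<lambda>t. LH (Ft t) (At t) (Dt1 t) (Dt2 t) N) 0"
      unfolding LH_def hterm_def
      apply (simp only: list.map prod_list.Cons prod_list.Nil)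
      by (intro continuous_intros isCont_pochhammer' cF) (use lp in \<open>simp_all add: v0\<close>)
    define P where "P = (\<lambda>t. hdf (Ft t) (At t) (Dt1 t) (Dt2 t) N \<noteq> 0 \<and> kdf (Ft t) (At t) (Dt1 t) (Dt2 t) N \<noteq> 0
        \<and> kkf (Ft t) (At t) (Dt1 t) (Dt2 t) N \<noteq> 0 \<and> pochhammer (kkf (Ft t) (At t) (Dt1 t) (Dt2 t) N) N \<noteq> 0)"
    have evP: "eventually P (at 0)"
    proof -
      have e1: "eventually (\<lambda>t. hdf (Ft t) (At t) (Dt1 t) (Dt2 t) N \<noteq> 0) (at 0)"
        by (rule ev_ne[OF c_hd]) (use hden in \<open>simp add: v0 hdf_def\<close>)
      have e2: "eventually (\<lambda>t. kdf (Ft t) (At t) (Dt1 t) (Dt2 t) N \<noteq> 0) (at 0)"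
        by (rule ev_ne[OF c_kd kd0])
      have e3: "eventually (\<lambda>t. kkf (Ft t) (At t) (Dt1 t) (Dt2 t) N \<noteq> 0) (at 0)"
        by (rule ev_ne[OF c_kk]) (use k0 in \<open>simp add: v0 kk\<close>)
      have e4: "eventually (\<lambda>t. pochhammer (kkf (Ft t) (At t) (Dt1 t) (Dt2 t) N) N \<noteq> 0) (at 0)"
        by (rule ev_ne[OF c_pk]) (use pk in \<open>simp add: v0 kk\<close>)
      show ?thesis unfolding P_def by (intro eventually_conj e1 e2 e3 e4)
    qed
    define B where "B = {t::real. \<not> mgen (Ft t) (At t) (Dt1 t) (Dt2 t)}"
    have cB: "countable B" unfolding B_def Ft_def At_def Dt1_def Dt2_def by (rule countable_bad)
    have "(\<lambda>t. LH (Ft t) (At t) (Dt1 t) (Dt2 t) N - RH (Ft t) (At t) (Dt1 t) (Dt2 t) N) 0 = 0"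
    proof (rule abstract_perturb[OF _ evP cB])
      show "isCont (\<lambda>t. LH (Ft t) (At t) (Dt1 t) (Dt2 t) N - RH (Ft t) (At t) (Dt1 t) (Dt2 t) N) 0"
        by (intro continuous_intros c_LH c_RH)
      fix t assume "P t" "t \<notin> B"
      then show "LH (Ft t) (At t) (Dt1 t) (Dt2 t) N - RH (Ft t) (At t) (Dt1 t) (Dt2 t) N = 0"
        unfolding P_def B_def using LH_RH_generic by auto
    qed
    then have "LH f a1 d1 d2 N = RH f a1 d1 d2 N" by (simp add: v0)
    then show ?thesis unfolding HF RHe .
  qed
qed

end
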